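(* Let $k\ge 4$ and $n\ge 4k^2$. Then there exist constants $c_k,C_k>0$ depending only on $k$ such that \[ c_kn\le crx_k(Q_n)\le C_kn. \] Thus $crx_k(Q_n)=\Theta_n(n)$.
   Context: $Q_n$ is the $n$-dimensional discrete binary cube: vertex set $\{0,1\}^n$, two vectors adjacent iff they differ in exactly one coordinate. An edge-coloured cycle is rainbow if its edges have distinct colours. For a graph $G$ in which any $k$ vertices lie on a common cycle, $crx_k(G)$ is the minimum number of colours in an edge-colouring of $G$ such that every set of $k$ vertices of $G$ lies in some rainbow cycle. *)

theory Defs
  imports Complex_Main
begin

definition graph_edges :: "'a set \<Rightarrow> ('a \<Rightarrow> 'a \<Rightarrow> bool) \<Rightarrow> 'a set set" where
  "graph_edges V adj = {{u, v} | u v. u \<in> V \<and> v \<in> V \<and> adj u v}"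

definition is_cycle :: "'a set \<Rightarrow> ('a \<Rightarrow> 'a \<Rightarrow> bool) \<Rightarrow> 'a list \<Rightarrow> bool" where
  "is_cycle V adj vs \<longleftrightarrow> length vs \<ge> 3 \<and> distinct vs \<and> set vs \<subseteq> V \<and>
     (\<forall>i < length vs. adj (vs ! i) (vs ! (Suc i mod length vs)))"

definition cycle_edges :: "'a list \<Rightarrow> 'a set set" where
  "cycle_edges vs = {{vs ! i, vs ! (Suc i mod length vs)} | i. i < length vs}"

definition rainbow_cycle :: "('a set \<Rightarrow> nat) \<Rightarrow> 'a list \<Rightarrow> bool" where
  "rainbow_cycle col vs \<longleftrightarrow> inj_on col (cycle_edges vs)"

definition crx :: "nat \<Rightarrow> 'a set \<Rightarrow> ('a \<Rightarrow> 'a \<Rightarrow> bool) \<Rightarrow> nat" where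
  "crx k V adj = (LEAST m. \<exists>col :: 'a set \<Rightarrow> nat.
      card (col ` graph_edges V adj) = m \<and>
      (\<forall>S. S \<subseteq> V \<and> card S = k \<longrightarrow>
         (\<exists>vs. is_cycle V adj vs \<and> S \<subseteq> set vs \<and> rainbow_cycle col vs)))"

definition cube_vertices :: "nat \<Rightarrow> bool list set" where
  "cube_vertices n = {xs. length xs = n}"

definition cube_adj :: "nat \<Rightarrow> bool list \<Rightarrow> bool list \<Rightarrow> bool" where
  "cube_adj n u v \<longleftrightarrow> card {i. i < n \<and> u ! i \<noteq> v ! i} = 1"

end

theory Submission
  imports Defs "HOL-Library.Countable"
begin


definition xr :: "nat set \<Rightarrow> nat set \<Rightarrow> nat set" where
  "xr A B = (A - B) \<union> (B - A)"

fun walk :: "nat set \<Rightarrow> nat list \<Rightarrow> nat set list" where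
  "walk v [] = []"
| "walk v (d # ds) = v # walk (xr v {d}) ds"

fun endp :: "nat set \<Rightarrow> nat list \<Rightarrow> nat set" where
  "endp v [] = v"
| "endp v (d # ds) = endp (xr v {d}) ds"

lemma length_walk[simp]: "length (walk v ds) = length ds"
  by (induction ds arbitrary: v) auto

lemma walk_append: "walk v (xs @ ys) = walk v xs @ walk (endp v xs) ys"
  by (induction xs arbitrary: v) auto

lemma endp_append: "endp v (xs @ ys) = endp (endp v xs) ys"
  by (induction xs arbitrary: v) auto

lemma walk_step:
  "i < length ds \<Longrightarrow> xr (walk v ds ! i) {ds ! i} =
     (if Suc i < length ds then walk v ds ! Suc i else endp v ds)"
proof (induction ds arbitrary: v i)
  case Nil then show ?case by simp
next
  case (Cons d ds)
  show ?case
  proof (cases i)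
    case 0 then show ?thesis by (cases ds) auto
  next
    case (Suc i') then show ?thesis using Cons by auto
  qed
qed

lemma nth_notin_take:
  assumes "distinct ds" "i < length ds" shows "ds ! i \<notin> set (take i ds)"
proof
  assume "ds ! i \<in> set (take i ds)"
  then obtain j where j: "j < length (take i ds)" "take i ds ! j = ds ! i"
    by (auto simp: in_set_conv_nth)
  then have "j < i" "ds ! j = ds ! i" using assms by auto
  with assms show False by (simp add: nth_eq_iff_index_eq)
qed

lemma nth_in_take:
  assumes "i < j" "j \<le> length ds" shows "ds ! i \<in> set (take j ds)"
proof -
  have "i < length (take j ds)" using assms by simp
  then have "take j ds ! i \<in> set (take j ds)" by (rule nth_mem)
  moreover have "take j ds ! i = ds ! i" using assms by simp
  ultimately show ?thesis by simp
qed

lemma xr_xr: "xr (xr A B) C = xr A (xr B C)"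
  unfolding xr_def by auto

lemma xr_insert: "d \<notin> B \<Longrightarrow> xr {d} B = insert d B"
  unfolding xr_def by auto

lemma xr_cancel: "xr A B = xr A C \<Longrightarrow> B = C"
  unfolding xr_def by blast

lemma xr_empty[simp]: "xr A {} = A"
  unfolding xr_def by auto

lemma walk_nth:
  "distinct ds \<Longrightarrow> i < length ds \<Longrightarrow> walk v ds ! i = xr v (set (take i ds))"
proof (induction ds arbitrary: v i)
  case Nil then show ?case by simp
next
  case (Cons d ds)
  show ?case
  proof (cases i)
    case 0 then show ?thesis by simp
  next
    case (Suc i')
    have "d \<notin> set (take i' ds)" using Cons.prems by (meson in_set_takeD distinct.simps(2))
    then show ?thesis using Cons Suc by (simp add: xr_xr xr_insert)
  qed
qed

lemma endp_distinct: "distinct ds \<Longrightarrow> endp v ds = xr v (set ds)"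
proof (induction ds arbitrary: v)
  case Nil then show ?case by simp
next
  case (Cons d ds)
  then show ?case by (simp add: xr_xr xr_insert)
qed

lemma take_set_proper:
  assumes "distinct ds" "i < length ds"
  shows "set (take i ds) \<noteq> set ds"
proof -
  have "ds ! i \<in> set ds" using assms by simp
  moreover have "ds ! i \<notin> set (take i ds)"
    using assms by (metis nth_notin_take)
  ultimately show ?thesis by blast
qed

lemma walk_set:
  assumes "distinct ds" "w \<in> set (walk v ds)"
  shows "\<exists>Z. Z \<subseteq> set ds \<and> Z \<noteq> set ds \<and> w = xr v Z"
proof -
  from assms(2) obtain i where i0: "i < length (walk v ds)" "walk v ds ! i = w"
    by (auto simp: in_set_conv_nth)
  then have i: "i < length ds" "w = walk v ds ! i" by auto
  have "w = xr v (set (take i ds))" using walk_nth[OF assms(1) i(1)] i(2) by simp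
  moreover have "set (take i ds) \<subseteq> set ds" by (rule set_take_subset)
  moreover have "set (take i ds) \<noteq> set ds" by (rule take_set_proper[OF assms(1) i(1)])
  ultimately show ?thesis by blast
qed

lemma take_set_inj:
  assumes "distinct ds" "i < length ds" "j < length ds" "set (take i ds) = set (take j ds)"
  shows "i = j"
proof (rule ccontr)
  assume "i \<noteq> j"
  then consider "i < j" | "j < i" by linarith
  then show False
  proof cases
    case 1
    then have "ds ! i \<in> set (take j ds)" using assms nth_in_take[of i j ds] by simp
    then show False by (metis assms(1,2,4) nth_notin_take)
  next
    case 2
    then have "ds ! j \<in> set (take i ds)" using assms nth_in_take[of j i ds] by simp
    then show False by (metis assms(1,3,4) nth_notin_take)
  qed
qed

lemma distinct_walk:
  assumes "distinct ds" shows "distinct (walk v ds)"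
  unfolding distinct_conv_nth
proof (intro allI impI)
  fix i j assume h: "i < length (walk v ds)" "j < length (walk v ds)" "i \<noteq> j"
  show "walk v ds ! i \<noteq> walk v ds ! j"
  proof
    assume eq: "walk v ds ! i = walk v ds ! j"
    have "xr v (set (take i ds)) = xr v (set (take j ds))"
      using eq h walk_nth[OF assms, of i v] walk_nth[OF assms, of j v] by simp
    then have "set (take i ds) = set (take j ds)" by (rule xr_cancel)
    then show False using take_set_inj[OF assms] h by simp
  qed
qed

lemma walk_subset:
  "v \<subseteq> U \<Longrightarrow> set ds \<subseteq> U \<Longrightarrow> w \<in> set (walk v ds) \<Longrightarrow> w \<subseteq> U"
proof (induction ds arbitrary: v)
  case Nil then show ?case by simp
next
  case (Cons d ds)
  have "xr v {d} \<subseteq> U" using Cons.prems unfolding xr_def by auto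
  then show ?case using Cons by auto
qed

definition stp :: "nat set \<Rightarrow> nat list \<Rightarrow> (nat \<times> nat set) list" where
  "stp v ds = map (\<lambda>(d, w). (d, w - {d})) (zip ds (walk v ds))"

lemma stp_append: "stp v (xs @ ys) = stp v xs @ stp (endp v xs) ys"
  unfolding stp_def by (simp add: walk_append)

lemma length_stp[simp]: "length (stp v ds) = length ds"
  unfolding stp_def by simp

lemma stp_nth: "i < length ds \<Longrightarrow> stp v ds ! i = (ds ! i, walk v ds ! i - {ds ! i})"
  unfolding stp_def by simp

lemma stp_Nil[simp]: "stp v [] = []"
  unfolding stp_def by simp

lemma stp_Cons[simp]: "stp v (d # ds) = (d, v - {d}) # stp (xr v {d}) ds"
  unfolding stp_def by simp

lemma map_fst_stp: "map fst (stp v ds) = ds"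
  by (induction ds arbitrary: v) auto

lemma stp_set:
  assumes "distinct ds" "x \<in> set (stp v ds)"
  shows "fst x \<in> set ds \<and> (\<exists>Z. Z \<subseteq> set ds \<and> snd x = xr v Z - {fst x})"
proof -
  from assms(2) obtain i where i0: "i < length (stp v ds)" "stp v ds ! i = x"
    unfolding in_set_conv_nth by blast
  then have i: "i < length ds" by simp
  have x: "x = (ds ! i, walk v ds ! i - {ds ! i})" using i0 stp_nth[OF i, of v] by simp
  have "walk v ds ! i \<in> set (walk v ds)" using i by simp
  from walk_set[OF assms(1) this] obtain Z where Z: "Z \<subseteq> set ds" "walk v ds ! i = xr v Z"
    by (elim exE conjE)
  have 1: "fst x \<in> set ds" using i x by simp
  have 2: "snd x = xr v Z - {fst x}" using x Z by simp
  show ?thesis using 1 2 Z(1) by blast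
qed

lemma walk_concat:
  assumes "\<And>j. j < m \<Longrightarrow> endp (b j) (f j) = b (Suc j)"
  shows "walk (b 0) (concat (map f [0..<m])) = concat (map (\<lambda>j. walk (b j) (f j)) [0..<m])
     \<and> endp (b 0) (concat (map f [0..<m])) = b m"
  using assms
proof (induction m)
  case 0 then show ?case by simp
next
  case (Suc m)
  then show ?case by (simp add: walk_append endp_append)
qed

lemma stp_concat:
  assumes "\<And>j. j < m \<Longrightarrow> endp (b j) (f j) = b (Suc j)"
  shows "stp (b 0) (concat (map f [0..<m])) = concat (map (\<lambda>j. stp (b j) (f j)) [0..<m])"
  using assms
proof (induction m)
  case 0 then show ?case by (simp add: stp_def)
next
  case (Suc m)
  have "endp (b 0) (concat (map f [0..<m])) = b m"
    using walk_concat[of m b f] Suc.prems by simp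
  then show ?case using Suc by (simp add: stp_append)
qed

lemma distinct_concat_upt:
  assumes "\<And>j. j < m \<Longrightarrow> distinct (f j)"
    and "\<And>i j. i < m \<Longrightarrow> j < m \<Longrightarrow> i \<noteq> j \<Longrightarrow> set (f i) \<inter> set (f j) = {}"
  shows "distinct (concat (map f [0..<m]))"
  using assms
proof (induction m)
  case 0 then show ?case by simp
next
  case (Suc m)
  have "distinct (concat (map f [0..<m]))" using Suc by simp
  moreover have "set (concat (map f [0..<m])) \<inter> set (f m) = {}"
  proof -
    have "\<And>i. i < m \<Longrightarrow> set (f i) \<inter> set (f m) = {}" using Suc.prems(2) by simp
    then show ?thesis by (auto simp: disjoint_iff)
  qed
  ultimately show ?case using Suc.prems(1) by simp
qed



locale cyc =
  fixes k n :: nat and X Zp Zq :: "nat \<Rightarrow> nat set"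
  assumes k2: "2 \<le> k" and kn: "2 * k \<le> n"
    and X_sub: "\<And>j. j < k \<Longrightarrow> X j \<subseteq> {..<n}"
    and X_inj: "\<And>j l. j < k \<Longrightarrow> l < k \<Longrightarrow> X j = X l \<Longrightarrow> j = l"
    and Zp_fin: "\<And>j. j < k \<Longrightarrow> finite (Zp j)"
    and Zq_fin: "\<And>j. j < k \<Longrightarrow> finite (Zq j)"
    and Zp_ne: "\<And>j. j < k \<Longrightarrow> Zp j \<noteq> {}"
    and Zq_ne: "\<And>j. j < k \<Longrightarrow> Zq j \<noteq> {}"
    and Zp_sub: "\<And>j. j < k \<Longrightarrow> Zp j \<subseteq> {2*k..<n}"
    and Zq_sub: "\<And>j. j < k \<Longrightarrow> Zq j \<subseteq> {2*k..<n}"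
    and Zpp: "\<And>j l. j < k \<Longrightarrow> l < k \<Longrightarrow> j \<noteq> l \<Longrightarrow> Zp j \<inter> Zp l = {}"
    and Zqq: "\<And>j l. j < k \<Longrightarrow> l < k \<Longrightarrow> j \<noteq> l \<Longrightarrow> Zq j \<inter> Zq l = {}"
    and Zpq: "\<And>j l. j < k \<Longrightarrow> l < k \<Longrightarrow> Zp j \<inter> Zq l = {}"
    and sep: "\<And>j l. j < k \<Longrightarrow> l < k \<Longrightarrow> X j - {..<2*k} \<noteq> X l - {..<2*k} \<Longrightarrow>
       \<exists>i. i \<in> xr (X j - {..<2*k}) (X l - {..<2*k}) \<and> (\<forall>m<k. i \<notin> Zp m \<and> i \<notin> Zq m)"
begin

definition H where "H = {..<2*k}"
definition tau where "tau j = X j \<inter> H"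
definition y where "y j = X j - H"
definition p where "p j = xr (y j) (Zp j)"
definition q where "q j = xr (y j) (Zq j)"
definition nxt where "nxt j = Suc j mod k"
definition prv where "prv j = (j + k - 1) mod k"
definition base where
  "base = {i. i < k \<and> i \<notin> X i} \<union> {i. k \<le> i \<and> i < 2*k \<and> i \<notin> X (i - k)}"
definition beta where "beta j = xr base {j, k + nxt j}"
definition Zall where "Zall = (\<Union>m\<in>{..<k}. Zp m \<union> Zq m)"

lemma nxt_lt: "nxt j < k" using k2 unfolding nxt_def by simp
lemma prv_lt: "prv j < k" using k2 unfolding prv_def by simp
lemma nxt_prv: "j < k \<Longrightarrow> nxt (prv j) = j"
  unfolding nxt_def prv_def using k2
  by (cases j) (simp_all add: mod_Suc_eq Suc_diff_le)
lemma prv_Suc: "j < k \<Longrightarrow> prv (Suc j) = j"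
  unfolding prv_def using k2 by simp
lemma nxt_neq: "j < k \<Longrightarrow> nxt j \<noteq> j"
  unfolding nxt_def using k2 by (cases "Suc j = k") auto
lemma nxt_eq_prv: "l < k \<Longrightarrow> j < k \<Longrightarrow> nxt l = j \<Longrightarrow> l = prv j"
proof -
  assume a: "l < k" "j < k" "nxt l = j"
  show "l = prv j"
  proof (cases "Suc l = k")
    case True then have "j = 0" using a unfolding nxt_def by simp
    then show ?thesis using True unfolding prv_def by simp
  next
    case False then have "j = Suc l" using a unfolding nxt_def by simp
    then show ?thesis using a prv_Suc by simp
  qed
qed

lemma xr_mem: "x \<in> xr A B \<longleftrightarrow> (x \<in> A) \<noteq> (x \<in> B)"
  unfolding xr_def by auto

lemma beta_lo: "i < k \<Longrightarrow> j < k \<Longrightarrow> i \<in> beta j \<longleftrightarrow> (if i = j then i \<in> X i else i \<notin> X i)"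
  unfolding beta_def base_def xr_mem by auto

lemma beta_hi: "i < k \<Longrightarrow> j < k \<Longrightarrow>
    k + i \<in> beta j \<longleftrightarrow> (if i = nxt j then k + i \<in> X i else k + i \<notin> X i)"
  unfolding beta_def base_def xr_mem by auto

lemma beta_sub: "j < k \<Longrightarrow> beta j \<subseteq> H"
  unfolding beta_def base_def H_def xr_def using nxt_lt[of j] by auto

lemma tau_mem: "i \<in> H \<Longrightarrow> i \<in> tau j \<longleftrightarrow> i \<in> X j"
  unfolding tau_def by auto

lemma H_lo: "i < k \<Longrightarrow> i \<in> H" unfolding H_def by simp
lemma H_hi: "i < k \<Longrightarrow> k + i \<in> H" unfolding H_def by simp

lemma beta_inj: "j < k \<Longrightarrow> l < k \<Longrightarrow> beta j = beta l \<Longrightarrow> j = l"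
  using beta_lo[of j j] beta_lo[of j l] by metis

lemma beta_ne_tau: "j < k \<Longrightarrow> l < k \<Longrightarrow> beta j \<noteq> tau l"
proof
  assume a: "j < k" "l < k" "beta j = tau l"
  show False
  proof (cases "l = j")
    case True
    have "k + j \<in> beta j \<longleftrightarrow> k + j \<notin> X j" using beta_hi[of j j] a nxt_neq[of j] by auto
    moreover have "k + j \<in> tau l \<longleftrightarrow> k + j \<in> X j" using tau_mem[OF H_hi[of j]] a True by simp
    ultimately show False using a by simp
  next
    case False
    have "l \<in> beta j \<longleftrightarrow> l \<notin> X l" using beta_lo[of l j] a False by auto
    moreover have "l \<in> tau l \<longleftrightarrow> l \<in> X l" using tau_mem[OF H_lo[of l]] a by simp
    ultimately show False using a by simp
  qed
qed

lemma P3: assumes "j < k" "l < k" "l \<noteq> j" "Z \<subseteq> xr (tau j) (beta j)"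
  shows "beta l \<noteq> xr (tau j) Z"
proof
  assume e: "beta l = xr (tau j) Z"
  have bj: "j \<in> beta j \<longleftrightarrow> j \<in> X j" using beta_lo[of j j] assms by simp
  have tj: "j \<in> tau j \<longleftrightarrow> j \<in> X j" using tau_mem[OF H_lo[of j]] assms by simp
  have "j \<notin> Z" using assms(4) bj tj unfolding xr_def by auto
  then have "j \<in> xr (tau j) Z \<longleftrightarrow> j \<in> X j" using tj unfolding xr_def by auto
  moreover have "j \<in> beta l \<longleftrightarrow> j \<notin> X j" using beta_lo[of j l] assms by auto
  ultimately show False using e by simp
qed

lemma P4: assumes "j < k" "l < k" "l \<noteq> prv j" "Z \<subseteq> xr (beta (prv j)) (tau j)"
  shows "beta l \<noteq> xr (beta (prv j)) Z"
proof
  assume e: "beta l = xr (beta (prv j)) Z"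
  have bj: "k + j \<in> beta (prv j) \<longleftrightarrow> k + j \<in> X j"
    using beta_hi[of j "prv j"] assms prv_lt nxt_prv by simp
  have tj: "k + j \<in> tau j \<longleftrightarrow> k + j \<in> X j" using tau_mem[OF H_hi[of j]] assms by simp
  have "k + j \<notin> Z" using assms(4) bj tj unfolding xr_def by auto
  then have "k + j \<in> xr (beta (prv j)) Z \<longleftrightarrow> k + j \<in> X j" using bj unfolding xr_def by auto
  moreover have "nxt l \<noteq> j" using nxt_eq_prv[of l j] assms by auto
  then have "k + j \<in> beta l \<longleftrightarrow> k + j \<notin> X j" using beta_hi[of j l] assms by auto
  ultimately show False using e by simp
qed

lemma xr_proper: "Z \<subseteq> xr a b \<Longrightarrow> Z \<noteq> xr a b \<Longrightarrow> xr a Z \<noteq> b"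
  unfolding xr_def by blast

lemma y_def2: "y j = X j - {..<2*k}" unfolding y_def H_def by simp

lemma Zall_I: "m < k \<Longrightarrow> Zp m \<subseteq> Zall" "m < k \<Longrightarrow> Zq m \<subseteq> Zall"
  unfolding Zall_def by auto

lemma G: assumes "j < k" "l < k" "Z1 \<subseteq> Zall" "Z2 \<subseteq> Zall" "xr (y j) Z1 = xr (y l) Z2"
  shows "y j = y l \<and> Z1 = Z2"
proof -
  have "y j = y l"
  proof (rule ccontr)
    assume "y j \<noteq> y l"
    then obtain i where i: "i \<in> xr (y j) (y l)" "\<forall>m<k. i \<notin> Zp m \<and> i \<notin> Zq m"
      using sep[OF assms(1,2)] unfolding y_def2 by blast
    have "i \<notin> Zall" using i(2) unfolding Zall_def by auto
    then have "i \<notin> Z1" "i \<notin> Z2" using assms(3,4) by auto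
    then have "(i \<in> xr (y j) Z1) \<noteq> (i \<in> xr (y l) Z2)" using i(1) unfolding xr_def by auto
    then show False using assms(5) by simp
  qed
  then show ?thesis using assms(5) xr_cancel by metis
qed

lemma Zp_Zall: "j < k \<Longrightarrow> Zp j \<subseteq> Zall" and Zq_Zall: "j < k \<Longrightarrow> Zq j \<subseteq> Zall"
  unfolding Zall_def by auto

lemma p_inj: assumes "j < k" "l < k" "p j = p l" shows "j = l"
proof (rule ccontr)
  assume ne: "j \<noteq> l"
  have "Zp j = Zp l" using G[OF assms(1,2) Zp_Zall[OF assms(1)] Zp_Zall[OF assms(2)]] assms(3)
    unfolding p_def by blast
  then show False using Zpp[OF assms(1,2) ne] Zp_ne[OF assms(1)] by simp
qed

lemma q_inj: assumes "j < k" "l < k" "q j = q l" shows "j = l"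
proof (rule ccontr)
  assume ne: "j \<noteq> l"
  have "Zq j = Zq l" using G[OF assms(1,2) Zq_Zall[OF assms(1)] Zq_Zall[OF assms(2)]] assms(3)
    unfolding q_def by blast
  then show False using Zqq[OF assms(1,2) ne] Zq_ne[OF assms(1)] by simp
qed

lemma p_ne_q: assumes "j < k" "l < k" shows "p j \<noteq> q l"
proof
  assume e: "p j = q l"
  have "Zp j = Zq l" using G[OF assms(1,2) Zp_Zall[OF assms(1)] Zq_Zall[OF assms(2)]] e
    unfolding p_def q_def by blast
  then show False using Zpq[OF assms(1,2)] Zp_ne[OF assms(1)] by simp
qed

lemma F6p: assumes "j < k" "l < k" "Z \<subseteq> Zp l \<union> Zq l" "p j = xr (y l) Z" shows "j = l"
proof (rule ccontr)
  assume ne: "j \<noteq> l"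
  have "Z \<subseteq> Zall" using assms(3) Zp_Zall[OF assms(2)] Zq_Zall[OF assms(2)] by blast
  then have "Zp j = Z" using G[OF assms(1,2) Zp_Zall[OF assms(1)]] assms(4) unfolding p_def by blast
  then have "Zp j \<subseteq> Zp l \<union> Zq l" using assms(3) by simp
  moreover have "Zp j \<inter> (Zp l \<union> Zq l) = {}" using Zpp[OF assms(1,2) ne] Zpq[OF assms(1,2)] by blast
  ultimately show False using Zp_ne[OF assms(1)] by blast
qed

lemma F6q: assumes "j < k" "l < k" "Z \<subseteq> Zp l \<union> Zq l" "q j = xr (y l) Z" shows "j = l"
proof (rule ccontr)
  assume ne: "j \<noteq> l"
  have "Z \<subseteq> Zall" using assms(3) Zp_Zall[OF assms(2)] Zq_Zall[OF assms(2)] by blast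
  then have "Zq j = Z" using G[OF assms(1,2) Zq_Zall[OF assms(1)]] assms(4) unfolding q_def by blast
  then have "Zq j \<subseteq> Zp l \<union> Zq l" using assms(3) by simp
  moreover have "Zq j \<inter> (Zp l \<union> Zq l) = {}" using Zqq[OF assms(1,2) ne] Zpq[OF assms(2,1)] by blast
  ultimately show False using Zq_ne[OF assms(1)] by blast
qed

lemma X_split: "j < k \<Longrightarrow> X j = tau j \<union> y j"
  unfolding tau_def y_def by auto

lemma F7: assumes "j < k" "l < k" "Z \<subseteq> Zp j \<union> Zq j" "Z' \<subseteq> Zp l \<union> Zq l"
  "xr (y j) Z = xr (y l) Z'" "tau j = tau l" shows "j = l"
proof -
  have "Z \<subseteq> Zall" using assms(3) Zp_Zall[OF assms(1)] Zq_Zall[OF assms(1)] by blast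
  moreover have "Z' \<subseteq> Zall" using assms(4) Zp_Zall[OF assms(2)] Zq_Zall[OF assms(2)] by blast
  ultimately have "y j = y l" using G[OF assms(1,2)] assms(5) by blast
  then have "X j = X l" using X_split assms by metis
  then show ?thesis using X_inj assms by blast
qed

lemma X_fin: "j < k \<Longrightarrow> finite (X j)" using X_sub finite_subset by blast
lemma H_fin: "finite H" unfolding H_def by simp
lemma H_n: "H \<subseteq> {..<n}" unfolding H_def using kn by auto
lemma tau_H: "tau j \<subseteq> H" unfolding tau_def by auto
lemma y_H: "y j \<inter> H = {}" unfolding y_def by auto
lemma Zp_H: "j < k \<Longrightarrow> Zp j \<inter> H = {}" using Zp_sub unfolding H_def by fastforce
lemma Zq_H: "j < k \<Longrightarrow> Zq j \<inter> H = {}" using Zq_sub unfolding H_def by fastforce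
lemma p_H: "j < k \<Longrightarrow> p j \<inter> H = {}" unfolding p_def xr_def using y_H Zp_H by blast
lemma q_H: "j < k \<Longrightarrow> q j \<inter> H = {}" unfolding q_def xr_def using y_H Zq_H by blast
lemma y_n: "j < k \<Longrightarrow> y j \<subseteq> {..<n}" unfolding y_def using X_sub by blast
lemma p_n: "j < k \<Longrightarrow> p j \<subseteq> {..<n}" unfolding p_def xr_def using y_n Zp_sub by fastforce
lemma q_n: "j < k \<Longrightarrow> q j \<subseteq> {..<n}" unfolding q_def xr_def using y_n Zq_sub by fastforce
lemma y_fin: "j < k \<Longrightarrow> finite (y j)" using y_n finite_subset by blast
lemma p_fin: "j < k \<Longrightarrow> finite (p j)" using p_n finite_subset by blast
lemma q_fin: "j < k \<Longrightarrow> finite (q j)" using q_n finite_subset by blast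
lemma beta_fin: "j < k \<Longrightarrow> finite (beta j)" using beta_sub H_fin finite_subset by blast
lemma tau_fin: "finite (tau j)" using tau_H H_fin finite_subset by blast

lemma dec: "T \<subseteq> H \<Longrightarrow> R \<inter> H = {} \<Longrightarrow> (T \<union> R) \<inter> H = T \<and> (T \<union> R) - H = R"
  by blast
lemma xr_Hpart: "Z \<subseteq> H \<Longrightarrow> R \<inter> H = {} \<Longrightarrow> xr (T \<union> R) Z = xr T Z \<union> R"
  unfolding xr_def by blast
lemma xr_Rpart: "Z \<inter> H = {} \<Longrightarrow> T \<subseteq> H \<Longrightarrow> xr (T \<union> R) Z = T \<union> xr R Z"
  unfolding xr_def by blast
lemma xr_same: "xr A A = {}" unfolding xr_def by blast
lemma xr_self: "xr A (xr A B) = B" unfolding xr_def by blast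
lemma xr_sub: "A \<subseteq> U \<Longrightarrow> B \<subseteq> U \<Longrightarrow> xr A B \<subseteq> U" unfolding xr_def by blast

definition dsA where "dsA j = sorted_list_of_set (xr (beta (prv j)) (tau j))"
definition dsB where "dsB j = sorted_list_of_set (Zp j) @ sorted_list_of_set (Zq j)"
definition dsC where "dsC j = sorted_list_of_set (xr (tau j) (beta j))"
definition dsD where "dsD j = sorted_list_of_set (xr (q j) (p (nxt j)))"
definition seg where "seg j = dsA j @ dsB j @ dsC j @ dsD j"
definition bA where "bA j = beta (prv j) \<union> p (j mod k)"
definition DS where "DS = concat (map seg [0..<k])"
definition W where "W = walk (bA 0) DS"

lemma fin_xr: "finite A \<Longrightarrow> finite B \<Longrightarrow> finite (xr A B)" unfolding xr_def by simp

lemma setA: "j < k \<Longrightarrow> set (dsA j) = xr (beta (prv j)) (tau j)"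
  unfolding dsA_def using fin_xr beta_fin prv_lt tau_fin by simp
lemma setB: "j < k \<Longrightarrow> set (dsB j) = Zp j \<union> Zq j"
  unfolding dsB_def using Zp_fin Zq_fin by simp
lemma setC: "j < k \<Longrightarrow> set (dsC j) = xr (tau j) (beta j)"
  unfolding dsC_def using fin_xr beta_fin tau_fin by simp
lemma setD: "j < k \<Longrightarrow> set (dsD j) = xr (q j) (p (nxt j))"
  unfolding dsD_def using fin_xr q_fin p_fin nxt_lt by simp

lemma distA: "distinct (dsA j)" unfolding dsA_def by simp
lemma distB: "j < k \<Longrightarrow> distinct (dsB j)" unfolding dsB_def using Zp_fin Zq_fin Zpq by simp
lemma distC: "distinct (dsC j)" unfolding dsC_def by simp
lemma distD: "distinct (dsD j)" unfolding dsD_def by simp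

lemma bA_j: "j < k \<Longrightarrow> bA j = beta (prv j) \<union> p j" unfolding bA_def by simp

lemma endA: "j < k \<Longrightarrow> endp (bA j) (dsA j) = tau j \<union> p j"
proof -
  assume j: "j < k"
  have "endp (bA j) (dsA j) = xr (beta (prv j) \<union> p j) (xr (beta (prv j)) (tau j))"
    using endp_distinct[OF distA] setA[OF j] bA_j[OF j] by simp
  also have "\<dots> = xr (beta (prv j)) (xr (beta (prv j)) (tau j)) \<union> p j"
    by (rule xr_Hpart) (use beta_sub[OF prv_lt] tau_H p_H[OF j] in \<open>auto simp: xr_def\<close>)
  also have "\<dots> = tau j \<union> p j" by (simp add: xr_self)
  finally show ?thesis .
qed

lemma endB: "j < k \<Longrightarrow> endp (tau j \<union> p j) (dsB j) = tau j \<union> q j"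
proof -
  assume j: "j < k"
  have "endp (tau j \<union> p j) (dsB j) = xr (tau j \<union> p j) (Zp j \<union> Zq j)"
    using endp_distinct[OF distB[OF j]] setB[OF j] by simp
  also have "\<dots> = tau j \<union> xr (p j) (Zp j \<union> Zq j)"
    by (rule xr_Rpart) (use Zp_H[OF j] Zq_H[OF j] tau_H in auto)
  also have "xr (p j) (Zp j \<union> Zq j) = q j"
    unfolding p_def q_def xr_def using Zpq[OF j j] by blast
  finally show ?thesis .
qed

lemma endC: "j < k \<Longrightarrow> endp (tau j \<union> q j) (dsC j) = beta j \<union> q j"
proof -
  assume j: "j < k"
  have "endp (tau j \<union> q j) (dsC j) = xr (tau j \<union> q j) (xr (tau j) (beta j))"
    using endp_distinct[OF distC] setC[OF j] by simp
  also have "\<dots> = xr (tau j) (xr (tau j) (beta j)) \<union> q j"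
    by (rule xr_Hpart) (use beta_sub[OF j] tau_H q_H[OF j] in \<open>auto simp: xr_def\<close>)
  also have "\<dots> = beta j \<union> q j" by (simp add: xr_self)
  finally show ?thesis .
qed

lemma endD: "j < k \<Longrightarrow> endp (beta j \<union> q j) (dsD j) = bA (Suc j)"
proof -
  assume j: "j < k"
  have "endp (beta j \<union> q j) (dsD j) = xr (beta j \<union> q j) (xr (q j) (p (nxt j)))"
    using endp_distinct[OF distD] setD[OF j] by simp
  also have "\<dots> = beta j \<union> xr (q j) (xr (q j) (p (nxt j)))"
    by (rule xr_Rpart) (use beta_sub[OF j] q_H[OF j] p_H[OF nxt_lt] in \<open>auto simp: xr_def\<close>)
  also have "\<dots> = beta j \<union> p (nxt j)" by (simp add: xr_self)
  also have "\<dots> = bA (Suc j)" unfolding bA_def prv_Suc[OF j] nxt_def by simp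
  finally show ?thesis .
qed

lemma walk_seg: "j < k \<Longrightarrow> walk (bA j) (seg j) =
   walk (bA j) (dsA j) @ walk (tau j \<union> p j) (dsB j) @ walk (tau j \<union> q j) (dsC j)
   @ walk (beta j \<union> q j) (dsD j)"
  unfolding seg_def by (simp add: walk_append endp_append endA endB endC)

lemma stp_seg: "j < k \<Longrightarrow> stp (bA j) (seg j) =
   stp (bA j) (dsA j) @ stp (tau j \<union> p j) (dsB j) @ stp (tau j \<union> q j) (dsC j)
   @ stp (beta j \<union> q j) (dsD j)"
  unfolding seg_def by (simp add: stp_append endp_append endA endB endC)

lemma end_seg: "j < k \<Longrightarrow> endp (bA j) (seg j) = bA (Suc j)"
  unfolding seg_def by (simp add: endp_append endA endB endC endD)

lemma W_concat: "W = concat (map (\<lambda>j. walk (bA j) (seg j)) [0..<k])"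
  unfolding W_def DS_def using walk_concat[of k bA seg] end_seg by blast

lemma DS_end: "endp (bA 0) DS = bA 0"
proof -
  have "endp (bA 0) DS = bA k"
    unfolding DS_def using walk_concat[of k bA seg] end_seg by blast
  also have "bA k = bA 0"
  proof -
    have "k + k - 1 = (k - 1) + k" using k2 by simp
    then have "(k + k - 1) mod k = (k - 1) mod k" by simp
    also have "\<dots> = k - 1" using k2 by simp
    finally have "(k + k - 1) mod k = k - 1" .
    then show ?thesis unfolding bA_def prv_def using k2 by simp
  qed
  finally show ?thesis .
qed

lemma stp_DS: "stp (bA 0) DS = concat (map (\<lambda>j. stp (bA j) (seg j)) [0..<k])"
  unfolding DS_def using stp_concat[of k bA seg] end_seg by blast

definition inA where "inA j V \<longleftrightarrow> V - H = p j \<and> (\<exists>Z. Z \<subseteq> xr (beta (prv j)) (tau j) \<and>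
   Z \<noteq> xr (beta (prv j)) (tau j) \<and> V \<inter> H = xr (beta (prv j)) Z)"
definition inB where "inB j V \<longleftrightarrow> V \<inter> H = tau j \<and> (\<exists>Z. Z \<subseteq> Zp j \<union> Zq j \<and> V - H = xr (y j) Z)
   \<and> V - H \<noteq> q j"
definition inC where "inC j V \<longleftrightarrow> V - H = q j \<and> (\<exists>Z. Z \<subseteq> xr (tau j) (beta j) \<and>
   Z \<noteq> xr (tau j) (beta j) \<and> V \<inter> H = xr (tau j) Z)"
definition inD where "inD j V \<longleftrightarrow> V \<inter> H = beta j \<and> V - H \<noteq> p (nxt j)"

lemma wA: assumes "j < k" "V \<in> set (walk (bA j) (dsA j))" shows "inA j V"
proof -
  obtain Z where Z: "Z \<subseteq> xr (beta (prv j)) (tau j)" "Z \<noteq> xr (beta (prv j)) (tau j)"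
     "V = xr (bA j) Z"
    using walk_set[OF distA assms(2)] setA[OF assms(1)] by auto
  have bs: "beta (prv j) \<subseteq> H" using beta_sub[OF prv_lt] .
  have ZH: "Z \<subseteq> H" using Z(1) bs tau_H unfolding xr_def by blast
  have V: "V = xr (beta (prv j)) Z \<union> p j"
    using Z(3) bA_j[OF assms(1)] xr_Hpart[OF ZH p_H[OF assms(1)]] by simp
  have "xr (beta (prv j)) Z \<subseteq> H" using bs ZH by (rule xr_sub)
  then have "V \<inter> H = xr (beta (prv j)) Z" "V - H = p j" using V dec p_H[OF assms(1)] by auto
  then show ?thesis unfolding inA_def using Z(1,2) by blast
qed

lemma wB: assumes "j < k" "V \<in> set (walk (tau j \<union> p j) (dsB j))" shows "inB j V"
proof -
  obtain Z where Z: "Z \<subseteq> Zp j \<union> Zq j" "Z \<noteq> Zp j \<union> Zq j" "V = xr (tau j \<union> p j) Z"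
    using walk_set[OF distB[OF assms(1)] assms(2)] setB[OF assms(1)] by auto
  have ZH: "Z \<inter> H = {}" using Z(1) Zp_H[OF assms(1)] Zq_H[OF assms(1)] by blast
  have V: "V = tau j \<union> xr (p j) Z" using Z(3) xr_Rpart[OF ZH tau_H] by simp
  have "xr (p j) Z \<inter> H = {}" using ZH p_H[OF assms(1)] unfolding xr_def by blast
  then have 1: "V \<inter> H = tau j" "V - H = xr (p j) Z" using V dec tau_H by auto
  have 2: "xr (p j) Z = xr (y j) (xr (Zp j) Z)" unfolding p_def by (simp add: xr_xr)
  have 3: "xr (Zp j) Z \<subseteq> Zp j \<union> Zq j" using Z(1) unfolding xr_def by blast
  have 4: "V - H \<noteq> q j"
  proof
    assume "V - H = q j"
    then have "xr (y j) (xr (Zp j) Z) = xr (y j) (Zq j)" using 1 2 unfolding q_def by simp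
    then have "xr (Zp j) Z = Zq j" by (rule xr_cancel)
    then have "Z = Zp j \<union> Zq j" using Zpq[OF assms(1) assms(1)] unfolding xr_def by blast
    then show False using Z(2) by simp
  qed
  show ?thesis unfolding inB_def using 1 2 3 4 by blast
qed

lemma wC: assumes "j < k" "V \<in> set (walk (tau j \<union> q j) (dsC j))" shows "inC j V"
proof -
  obtain Z where Z: "Z \<subseteq> xr (tau j) (beta j)" "Z \<noteq> xr (tau j) (beta j)"
     "V = xr (tau j \<union> q j) Z"
    using walk_set[OF distC assms(2)] setC[OF assms(1)] by auto
  have bs: "beta j \<subseteq> H" using beta_sub[OF assms(1)] .
  have ZH: "Z \<subseteq> H" using Z(1) bs tau_H unfolding xr_def by blast
  have V: "V = xr (tau j) Z \<union> q j"
    using Z(3) xr_Hpart[OF ZH q_H[OF assms(1)]] by simp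
  have "xr (tau j) Z \<subseteq> H" using tau_H ZH by (rule xr_sub)
  then have "V \<inter> H = xr (tau j) Z" "V - H = q j" using V dec q_H[OF assms(1)] by auto
  then show ?thesis unfolding inC_def using Z(1,2) by blast
qed

lemma wD: assumes "j < k" "V \<in> set (walk (beta j \<union> q j) (dsD j))" shows "inD j V"
proof -
  obtain Z where Z: "Z \<subseteq> xr (q j) (p (nxt j))" "Z \<noteq> xr (q j) (p (nxt j))"
     "V = xr (beta j \<union> q j) Z"
    using walk_set[OF distD assms(2)] setD[OF assms(1)] by auto
  have ZH: "Z \<inter> H = {}" using Z(1) q_H[OF assms(1)] p_H[OF nxt_lt] unfolding xr_def by blast
  have V: "V = beta j \<union> xr (q j) Z" using Z(3) xr_Rpart[OF ZH beta_sub[OF assms(1)]] by simp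
  have "xr (q j) Z \<inter> H = {}" using ZH q_H[OF assms(1)] unfolding xr_def by blast
  then have 1: "V \<inter> H = beta j" "V - H = xr (q j) Z" using V dec beta_sub[OF assms(1)] by auto
  have "xr (q j) Z \<noteq> p (nxt j)" using xr_proper[OF Z(1,2)] .
  then show ?thesis unfolding inD_def using 1 by simp
qed

lemma AA: "j < k \<Longrightarrow> l < k \<Longrightarrow> inA j V \<Longrightarrow> inA l V \<Longrightarrow> j = l"
  unfolding inA_def using p_inj by metis

lemma AB: assumes "j < k" "l < k" "inA j V" "inB l V" shows False
proof -
  obtain Z where Z: "Z \<subseteq> Zp l \<union> Zq l" "V - H = xr (y l) Z" using assms(4) unfolding inB_def by blast
  have "p j = xr (y l) Z" using Z(2) assms(3) unfolding inA_def by simp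
  then have jl: "j = l" using F6p[OF assms(1,2) Z(1)] by simp
  obtain Z' where Z': "Z' \<subseteq> xr (beta (prv j)) (tau j)" "Z' \<noteq> xr (beta (prv j)) (tau j)"
    "V \<inter> H = xr (beta (prv j)) Z'" using assms(3) unfolding inA_def by blast
  have "V \<inter> H = tau j" using assms(4) jl unfolding inB_def by simp
  then show False using xr_proper[OF Z'(1,2)] Z'(3) by simp
qed

lemma AC: "j < k \<Longrightarrow> l < k \<Longrightarrow> inA j V \<Longrightarrow> inC l V \<Longrightarrow> False"
  unfolding inA_def inC_def using p_ne_q by metis

lemma AD: assumes "j < k" "l < k" "inA j V" "inD l V" shows False
proof -
  obtain Z' where Z': "Z' \<subseteq> xr (beta (prv j)) (tau j)"
    "V \<inter> H = xr (beta (prv j)) Z'" using assms(3) unfolding inA_def by blast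
  have "beta l = xr (beta (prv j)) Z'" using Z' assms(4) unfolding inD_def by simp
  then have "l = prv j" using P4[OF assms(1,2) _ Z'(1)] by blast
  then have "nxt l = j" using nxt_prv assms by simp
  then show False using assms(3,4) unfolding inA_def inD_def by simp
qed

lemma BB: assumes "j < k" "l < k" "inB j V" "inB l V" shows "j = l"
proof -
  obtain Z where Z: "Z \<subseteq> Zp j \<union> Zq j" "V - H = xr (y j) Z" using assms(3) unfolding inB_def by blast
  obtain Z' where Z': "Z' \<subseteq> Zp l \<union> Zq l" "V - H = xr (y l) Z'" using assms(4) unfolding inB_def by blast
  have "tau j = tau l" using assms(3,4) unfolding inB_def by simp
  then show ?thesis using F7[OF assms(1,2) Z(1) Z'(1)] Z(2) Z'(2) by simp
qed

lemma BC: assumes "j < k" "l < k" "inB j V" "inC l V" shows False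
proof -
  obtain Z where Z: "Z \<subseteq> Zp j \<union> Zq j" "V - H = xr (y j) Z" using assms(3) unfolding inB_def by blast
  have "q l = xr (y j) Z" using Z(2) assms(4) unfolding inC_def by simp
  then have "l = j" using F6q[OF assms(2,1) Z(1)] by simp
  then show False using assms(3,4) unfolding inB_def inC_def by simp
qed

lemma BD: "j < k \<Longrightarrow> l < k \<Longrightarrow> inB j V \<Longrightarrow> inD l V \<Longrightarrow> False"
  unfolding inB_def inD_def using beta_ne_tau by metis

lemma CC: "j < k \<Longrightarrow> l < k \<Longrightarrow> inC j V \<Longrightarrow> inC l V \<Longrightarrow> j = l"
  unfolding inC_def using q_inj by metis

lemma CD: assumes "j < k" "l < k" "inC j V" "inD l V" shows False
proof -
  obtain Z' where Z': "Z' \<subseteq> xr (tau j) (beta j)" "Z' \<noteq> xr (tau j) (beta j)"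
    "V \<inter> H = xr (tau j) Z'" using assms(3) unfolding inC_def by blast
  have e: "beta l = xr (tau j) Z'" using Z' assms(4) unfolding inD_def by simp
  show False
  proof (cases "l = j")
    case True then show False using xr_proper[OF Z'(1,2)] e by simp
  next
    case False then show False using P3[OF assms(1,2) False Z'(1)] e by simp
  qed
qed

lemma DD: "j < k \<Longrightarrow> l < k \<Longrightarrow> inD j V \<Longrightarrow> inD l V \<Longrightarrow> j = l"
  unfolding inD_def using beta_inj by metis

lemma seg_in: assumes "j < k" "V \<in> set (walk (bA j) (seg j))"
  shows "inA j V \<or> inB j V \<or> inC j V \<or> inD j V"
  using assms(2) walk_seg[OF assms(1)] wA[OF assms(1)] wB[OF assms(1)] wC[OF assms(1)] wD[OF assms(1)]
  by auto

lemma seg_distinct: assumes "j < k" shows "distinct (walk (bA j) (seg j))"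
proof -
  have d: "distinct (walk (bA j) (dsA j))" "distinct (walk (tau j \<union> p j) (dsB j))"
    "distinct (walk (tau j \<union> q j) (dsC j))" "distinct (walk (beta j \<union> q j) (dsD j))"
    using distinct_walk distA distB[OF assms] distC distD by auto
  have "set (walk (bA j) (dsA j)) \<inter> set (walk (tau j \<union> p j) (dsB j)) = {}"
    using wA[OF assms] wB[OF assms] AB[OF assms assms] by blast
  moreover have "set (walk (bA j) (dsA j)) \<inter> set (walk (tau j \<union> q j) (dsC j)) = {}"
    using wA[OF assms] wC[OF assms] AC[OF assms assms] by blast
  moreover have "set (walk (bA j) (dsA j)) \<inter> set (walk (beta j \<union> q j) (dsD j)) = {}"
    using wA[OF assms] wD[OF assms] AD[OF assms assms] by blast
  moreover have "set (walk (tau j \<union> p j) (dsB j)) \<inter> set (walk (tau j \<union> q j) (dsC j)) = {}"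
    using wB[OF assms] wC[OF assms] BC[OF assms assms] by blast
  moreover have "set (walk (tau j \<union> p j) (dsB j)) \<inter> set (walk (beta j \<union> q j) (dsD j)) = {}"
    using wB[OF assms] wD[OF assms] BD[OF assms assms] by blast
  moreover have "set (walk (tau j \<union> q j) (dsC j)) \<inter> set (walk (beta j \<union> q j) (dsD j)) = {}"
    using wC[OF assms] wD[OF assms] CD[OF assms assms] by blast
  ultimately show ?thesis using d walk_seg[OF assms] by auto
qed

lemma seg_disj: assumes "j < k" "l < k" "j \<noteq> l"
  shows "set (walk (bA j) (seg j)) \<inter> set (walk (bA l) (seg l)) = {}"
proof (rule ccontr)
  assume "set (walk (bA j) (seg j)) \<inter> set (walk (bA l) (seg l)) \<noteq> {}"
  then obtain V where V: "V \<in> set (walk (bA j) (seg j))" "V \<in> set (walk (bA l) (seg l))" by blast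
  have 1: "inA j V \<or> inB j V \<or> inC j V \<or> inD j V" using seg_in[OF assms(1) V(1)] .
  have 2: "inA l V \<or> inB l V \<or> inC l V \<or> inD l V" using seg_in[OF assms(2) V(2)] .
  show False using 1 2 assms AA AB AC AD BB BC BD CC CD DD by metis
qed

lemma W_distinct: "distinct W"
  unfolding W_concat by (rule distinct_concat_upt) (use seg_distinct seg_disj in auto)

lemma len_W: "length W = length DS" unfolding W_def by simp

lemma W_step: assumes "i < length DS"
  shows "W ! (Suc i mod length DS) = xr (W ! i) {DS ! i}"
proof (cases "Suc i < length DS")
  case True
  then show ?thesis using walk_step[OF assms, of "bA 0"] unfolding W_def by simp
next
  case False
  then have e: "Suc i = length DS" using assms by simp
  have "xr (W ! i) {DS ! i} = bA 0" using walk_step[OF assms, of "bA 0"] False DS_end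
    unfolding W_def by simp
  moreover have "W ! 0 = bA 0" unfolding W_def using assms by (cases DS) auto
  ultimately show ?thesis using e by simp
qed

lemma set_seg_n: "j < k \<Longrightarrow> set (seg j) \<subseteq> {..<n}"
proof -
  assume j: "j < k"
  have "set (dsA j) \<subseteq> {..<n}" using setA[OF j] beta_sub[OF prv_lt] tau_H H_n
    unfolding xr_def by blast
  moreover have "set (dsB j) \<subseteq> {..<n}" using setB[OF j] Zp_sub[OF j] Zq_sub[OF j] by auto
  moreover have "set (dsC j) \<subseteq> {..<n}" using setC[OF j] beta_sub[OF j] tau_H H_n
    unfolding xr_def by blast
  moreover have "set (dsD j) \<subseteq> {..<n}" using setD[OF j] q_n[OF j] p_n[OF nxt_lt]
    unfolding xr_def by blast
  ultimately show ?thesis unfolding seg_def by auto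
qed

lemma DS_n: "set DS \<subseteq> {..<n}"
proof
  fix x assume "x \<in> set DS"
  then obtain j where "j < k" "x \<in> set (seg j)" unfolding DS_def by auto
  then show "x \<in> {..<n}" using set_seg_n by blast
qed

lemma bA0_n: "bA 0 \<subseteq> {..<n}"
  using bA_j[of 0] k2 beta_sub[OF prv_lt] H_n p_n[of 0] by auto

lemma W_n: "V \<in> set W \<Longrightarrow> V \<subseteq> {..<n}"
  unfolding W_def using walk_subset[OF bA0_n DS_n] by blast

lemma X_in_W: assumes j: "j < k" shows "X j \<in> set W"
proof -
  let ?a = "sorted_list_of_set (Zp j)"
  have la: "length ?a < length (dsB j)"
    using Zq_ne[OF j] Zq_fin[OF j] unfolding dsB_def by (simp add: card_gt_0_iff)
  have "set (take (length ?a) (dsB j)) = Zp j" unfolding dsB_def using Zp_fin[OF j] by simp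
  then have "walk (tau j \<union> p j) (dsB j) ! length ?a = xr (tau j \<union> p j) (Zp j)"
    using walk_nth[OF distB[OF j] la] by simp
  also have "\<dots> = tau j \<union> xr (p j) (Zp j)" by (rule xr_Rpart) (use Zp_H[OF j] tau_H in auto)
  also have "xr (p j) (Zp j) = y j" unfolding p_def xr_xr by (simp add: xr_same)
  finally have "tau j \<union> y j \<in> set (walk (tau j \<union> p j) (dsB j))"
    using la by (metis length_walk nth_mem)
  then have "X j \<in> set (walk (bA j) (seg j))" using walk_seg[OF j] X_split[OF j] by simp
  then show ?thesis unfolding W_concat using j by auto
qed

definition ctup :: "nat \<times> nat set \<Rightarrow> nat \<times> nat set \<times> nat" where
  "ctup x = (fst x, snd x \<inter> H, if fst x \<in> H then card (snd x - H) mod (2*k) else 0)"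

lemma cA: assumes "j < k" "x \<in> set (stp (bA j) (dsA j))" shows "fst x \<in> H \<and> snd x - H = p j"
proof -
  obtain Z where Z: "fst x \<in> set (dsA j)" "Z \<subseteq> set (dsA j)" "snd x = xr (bA j) Z - {fst x}"
    using stp_set[OF distA assms(2)] by blast
  have sH: "set (dsA j) \<subseteq> H" using setA[OF assms(1)] beta_sub[OF prv_lt] tau_H
    unfolding xr_def by blast
  have "xr (bA j) Z = xr (beta (prv j)) Z \<union> p j"
    using bA_j[OF assms(1)] xr_Hpart[of Z "p j" "beta (prv j)"] Z(2) sH p_H[OF assms(1)] by auto
  moreover have "xr (beta (prv j)) Z \<subseteq> H" using beta_sub[OF prv_lt] Z(2) sH by (intro xr_sub) auto
  ultimately have "snd x - H = p j" using Z(1,3) sH p_H[OF assms(1)] by auto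
  then show ?thesis using Z(1) sH by auto
qed

lemma cB: assumes "j < k" "x \<in> set (stp (tau j \<union> p j) (dsB j))"
  shows "fst x \<in> Zp j \<union> Zq j \<and> snd x \<inter> H = tau j"
proof -
  obtain Z where Z: "fst x \<in> set (dsB j)" "Z \<subseteq> set (dsB j)" "snd x = xr (tau j \<union> p j) Z - {fst x}"
    using stp_set[OF distB[OF assms(1)] assms(2)] by blast
  have sH: "set (dsB j) \<inter> H = {}" using setB[OF assms(1)] Zp_H[OF assms(1)] Zq_H[OF assms(1)] by auto
  have "xr (tau j \<union> p j) Z = tau j \<union> xr (p j) Z"
    by (rule xr_Rpart) (use Z(2) sH tau_H in auto)
  moreover have "xr (p j) Z \<inter> H = {}" using p_H[OF assms(1)] Z(2) sH unfolding xr_def by blast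
  ultimately have "snd x \<inter> H = tau j" using Z(1,3) sH tau_H[of j] by auto
  then show ?thesis using Z(1) setB[OF assms(1)] by auto
qed

lemma cC: assumes "j < k" "x \<in> set (stp (tau j \<union> q j) (dsC j))" shows "fst x \<in> H \<and> snd x - H = q j"
proof -
  obtain Z where Z: "fst x \<in> set (dsC j)" "Z \<subseteq> set (dsC j)" "snd x = xr (tau j \<union> q j) Z - {fst x}"
    using stp_set[OF distC assms(2)] by blast
  have sH: "set (dsC j) \<subseteq> H" using setC[OF assms(1)] beta_sub[OF assms(1)] tau_H
    unfolding xr_def by blast
  have "xr (tau j \<union> q j) Z = xr (tau j) Z \<union> q j"
    using xr_Hpart[of Z "q j" "tau j"] Z(2) sH q_H[OF assms(1)] by auto
  moreover have "xr (tau j) Z \<subseteq> H" using tau_H Z(2) sH by (intro xr_sub) auto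
  ultimately have "snd x - H = q j" using Z(1,3) sH q_H[OF assms(1)] by auto
  then show ?thesis using Z(1) sH by auto
qed

lemma cD: assumes "j < k" "x \<in> set (stp (beta j \<union> q j) (dsD j))"
  shows "fst x \<notin> H \<and> snd x \<inter> H = beta j"
proof -
  obtain Z where Z: "fst x \<in> set (dsD j)" "Z \<subseteq> set (dsD j)" "snd x = xr (beta j \<union> q j) Z - {fst x}"
    using stp_set[OF distD assms(2)] by blast
  have sH: "set (dsD j) \<inter> H = {}" using setD[OF assms(1)] q_H[OF assms(1)] p_H[OF nxt_lt]
    unfolding xr_def by blast
  have "xr (beta j \<union> q j) Z = beta j \<union> xr (q j) Z"
    by (rule xr_Rpart) (use Z(2) sH beta_sub[OF assms(1)] in auto)
  moreover have "xr (q j) Z \<inter> H = {}" using q_H[OF assms(1)] Z(2) sH unfolding xr_def by blast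
  ultimately have "snd x \<inter> H = beta j" using Z(1,3) sH beta_sub[OF assms(1)] by auto
  then show ?thesis using Z(1) sH by auto
qed

lemma distinct_ctup: "distinct ds \<Longrightarrow> distinct (map ctup (stp v ds))"
proof -
  assume d: "distinct ds"
  have "map fst (map ctup (stp v ds)) = ds"
    using map_fst_stp[of v ds] by (simp add: ctup_def comp_def)
  then have "distinct (map fst (map ctup (stp v ds)))" using d by simp
  then show ?thesis by (metis distinct_map)
qed

context
  assumes resp: "\<And>j. j < k \<Longrightarrow> card (p j) mod (2*k) = 2*j"
    and resq: "\<And>j. j < k \<Longrightarrow> card (q j) mod (2*k) = 2*j + 1"
begin

definition cA' :: "nat \<Rightarrow> nat \<times> nat set \<times> nat \<Rightarrow> bool" where "cA' j c \<longleftrightarrow> fst c \<in> H \<and> snd (snd c) = 2*j"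
definition cB' :: "nat \<Rightarrow> nat \<times> nat set \<times> nat \<Rightarrow> bool" where "cB' j c \<longleftrightarrow> fst c \<in> Zp j \<union> Zq j \<and> fst (snd c) = tau j"
definition cC' :: "nat \<Rightarrow> nat \<times> nat set \<times> nat \<Rightarrow> bool" where "cC' j c \<longleftrightarrow> fst c \<in> H \<and> snd (snd c) = 2*j+1"
definition cD' :: "nat \<Rightarrow> nat \<times> nat set \<times> nat \<Rightarrow> bool" where "cD' j c \<longleftrightarrow> fst c \<notin> H \<and> fst (snd c) = beta j"

lemma ccA: "j < k \<Longrightarrow> c \<in> set (map ctup (stp (bA j) (dsA j))) \<Longrightarrow> cA' j c"
  unfolding cA'_def ctup_def using cA resp by auto
lemma ccB: assumes "j < k" "c \<in> set (map ctup (stp (tau j \<union> p j) (dsB j)))" shows "cB' j c"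
proof -
  obtain x where x: "x \<in> set (stp (tau j \<union> p j) (dsB j))" "c = ctup x" using assms(2) by auto
  have "fst x \<in> Zp j \<union> Zq j \<and> snd x \<inter> H = tau j" using cB[OF assms(1) x(1)] .
  moreover have "fst c = fst x" "fst (snd c) = snd x \<inter> H" using x(2) unfolding ctup_def by auto
  ultimately show ?thesis unfolding cB'_def by simp
qed
lemma ccC: "j < k \<Longrightarrow> c \<in> set (map ctup (stp (tau j \<union> q j) (dsC j))) \<Longrightarrow> cC' j c"
  unfolding cC'_def ctup_def using cC resq by auto
lemma ccD: "j < k \<Longrightarrow> c \<in> set (map ctup (stp (beta j \<union> q j) (dsD j))) \<Longrightarrow> cD' j c"
  unfolding cD'_def ctup_def using cD by auto

lemma ZpqH: "j < k \<Longrightarrow> d \<in> Zp j \<union> Zq j \<Longrightarrow> d \<notin> H" using Zp_H Zq_H by blast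

lemma cAA: "cA' j c \<Longrightarrow> cA' l c \<Longrightarrow> j = l" unfolding cA'_def by simp
lemma cAB: "j < k \<Longrightarrow> l < k \<Longrightarrow> cA' j c \<Longrightarrow> cB' l c \<Longrightarrow> False"
  unfolding cA'_def cB'_def using ZpqH by blast
lemma cAC: "cA' j c \<Longrightarrow> cC' l c \<Longrightarrow> False" unfolding cA'_def cC'_def by presburger
lemma cAD: "cA' j c \<Longrightarrow> cD' l c \<Longrightarrow> False" unfolding cA'_def cD'_def by simp
lemma cBB: assumes "j < k" "l < k" "cB' j c" "cB' l c" shows "j = l"
proof (rule ccontr)
  assume ne: "j \<noteq> l"
  have "(Zp j \<union> Zq j) \<inter> (Zp l \<union> Zq l) = {}"
    using Zpp[OF assms(1,2) ne] Zqq[OF assms(1,2) ne] Zpq[OF assms(1,2)] Zpq[OF assms(2,1)] by blast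
  then show False using assms(3,4) unfolding cB'_def by blast
qed
lemma cBC: "j < k \<Longrightarrow> l < k \<Longrightarrow> cB' j c \<Longrightarrow> cC' l c \<Longrightarrow> False"
  unfolding cC'_def cB'_def using ZpqH by blast
lemma cBD: "j < k \<Longrightarrow> l < k \<Longrightarrow> cB' j c \<Longrightarrow> cD' l c \<Longrightarrow> False"
  unfolding cB'_def cD'_def using beta_ne_tau by metis
lemma cCC: "cC' j c \<Longrightarrow> cC' l c \<Longrightarrow> j = l" unfolding cC'_def by simp
lemma cCD: "cC' j c \<Longrightarrow> cD' l c \<Longrightarrow> False" unfolding cC'_def cD'_def by simp
lemma cDD: "j < k \<Longrightarrow> l < k \<Longrightarrow> cD' j c \<Longrightarrow> cD' l c \<Longrightarrow> j = l"
  unfolding cD'_def using beta_inj by metis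

lemma cseg: "j < k \<Longrightarrow> map ctup (stp (bA j) (seg j)) =
   map ctup (stp (bA j) (dsA j)) @ map ctup (stp (tau j \<union> p j) (dsB j)) @
   map ctup (stp (tau j \<union> q j) (dsC j)) @ map ctup (stp (beta j \<union> q j) (dsD j))"
  using stp_seg by simp

lemma cseg_in: assumes "j < k" "c \<in> set (map ctup (stp (bA j) (seg j)))"
  shows "cA' j c \<or> cB' j c \<or> cC' j c \<or> cD' j c"
proof -
  have "c \<in> set (map ctup (stp (bA j) (dsA j))) \<or> c \<in> set (map ctup (stp (tau j \<union> p j) (dsB j))) \<or>
     c \<in> set (map ctup (stp (tau j \<union> q j) (dsC j))) \<or> c \<in> set (map ctup (stp (beta j \<union> q j) (dsD j)))"
    using assms(2) cseg[OF assms(1)] by (simp only: set_append Un_iff)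
  then show ?thesis using ccA ccB ccC ccD assms(1) by blast
qed

lemma cseg_distinct: assumes j: "j < k" shows "distinct (map ctup (stp (bA j) (seg j)))"
proof -
  have d: "distinct (map ctup (stp (bA j) (dsA j)))" "distinct (map ctup (stp (tau j \<union> p j) (dsB j)))"
    "distinct (map ctup (stp (tau j \<union> q j) (dsC j)))" "distinct (map ctup (stp (beta j \<union> q j) (dsD j)))"
    using distinct_ctup distA distB[OF j] distC distD by auto
  have "set (map ctup (stp (bA j) (dsA j))) \<inter> set (map ctup (stp (tau j \<union> p j) (dsB j))) = {}"
    using ccA[OF j] ccB[OF j] cAB[OF j j] by blast
  moreover have "set (map ctup (stp (bA j) (dsA j))) \<inter> set (map ctup (stp (tau j \<union> q j) (dsC j))) = {}"
    using ccA[OF j] ccC[OF j] cAC by blast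
  moreover have "set (map ctup (stp (bA j) (dsA j))) \<inter> set (map ctup (stp (beta j \<union> q j) (dsD j))) = {}"
    using ccA[OF j] ccD[OF j] cAD by blast
  moreover have "set (map ctup (stp (tau j \<union> p j) (dsB j))) \<inter> set (map ctup (stp (tau j \<union> q j) (dsC j))) = {}"
    using ccB[OF j] ccC[OF j] cBC[OF j j] by blast
  moreover have "set (map ctup (stp (tau j \<union> p j) (dsB j))) \<inter> set (map ctup (stp (beta j \<union> q j) (dsD j))) = {}"
    using ccB[OF j] ccD[OF j] cBD[OF j j] by blast
  moreover have "set (map ctup (stp (tau j \<union> q j) (dsC j))) \<inter> set (map ctup (stp (beta j \<union> q j) (dsD j))) = {}"
    using ccC[OF j] ccD[OF j] cCD by blast
  ultimately show ?thesis using d cseg[OF j] by (simp only: distinct_append set_append) blast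
qed

lemma cseg_disj: assumes "j < k" "l < k" "j \<noteq> l"
  shows "set (map ctup (stp (bA j) (seg j))) \<inter> set (map ctup (stp (bA l) (seg l))) = {}"
proof (rule ccontr)
  assume "set (map ctup (stp (bA j) (seg j))) \<inter> set (map ctup (stp (bA l) (seg l))) \<noteq> {}"
  then obtain c where c: "c \<in> set (map ctup (stp (bA j) (seg j)))" "c \<in> set (map ctup (stp (bA l) (seg l)))"
    by blast
  have 1: "cA' j c \<or> cB' j c \<or> cC' j c \<or> cD' j c" using cseg_in[OF assms(1) c(1)] .
  have 2: "cA' l c \<or> cB' l c \<or> cC' l c \<or> cD' l c" using cseg_in[OF assms(2) c(2)] .
  show False using 1 2 assms cAA cAB cAC cAD cBB cBC cBD cCC cCD cDD by metis
qed

lemma colours_distinct: "distinct (map ctup (stp (bA 0) DS))"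
proof -
  have "map ctup (stp (bA 0) DS) = concat (map (\<lambda>j. map ctup (stp (bA j) (seg j))) [0..<k])"
    unfolding stp_DS by (simp add: map_concat comp_def)
  moreover have "distinct (concat (map (\<lambda>j. map ctup (stp (bA j) (seg j))) [0..<k]))"
    by (rule distinct_concat_upt) (use cseg_distinct cseg_disj in auto)
  ultimately show ?thesis by simp
qed

end

end


definition vec :: "nat \<Rightarrow> nat set \<Rightarrow> bool list" where
  "vec n A = map (\<lambda>i. i \<in> A) [0..<n]"
definition setof :: "bool list \<Rightarrow> nat set" where
  "setof xs = {i. i < length xs \<and> xs ! i}"

lemma length_vec[simp]: "length (vec n A) = n" unfolding vec_def by simp
lemma vec_nth: "i < n \<Longrightarrow> vec n A ! i = (i \<in> A)" unfolding vec_def by simp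
lemma setof_vec: "A \<subseteq> {..<n} \<Longrightarrow> setof (vec n A) = A"
  unfolding setof_def using vec_nth by auto
lemma vec_setof: "length xs = n \<Longrightarrow> vec n (setof xs) = xs"
  unfolding setof_def vec_def by (auto intro: nth_equalityI)
lemma setof_n: "setof xs \<subseteq> {..<length xs}" unfolding setof_def by auto
lemma vec_inj: "A \<subseteq> {..<n} \<Longrightarrow> B \<subseteq> {..<n} \<Longrightarrow> vec n A = vec n B \<Longrightarrow> A = B"
  using setof_vec by metis
lemma setof_inj: "length u = length v \<Longrightarrow> setof u = setof v \<Longrightarrow> u = v"
  using vec_setof by metis

lemma adj_vec: assumes "A \<subseteq> {..<n}" "B \<subseteq> {..<n}"
  shows "{i. i < n \<and> vec n A ! i \<noteq> vec n B ! i} = xr A B"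
  using assms vec_nth unfolding xr_def by auto

lemma diff_setof: assumes "length u = n" "length v = n"
  shows "{i. i < n \<and> u ! i \<noteq> v ! i} = xr (setof u) (setof v)"
  using assms unfolding xr_def setof_def by auto

definition colk :: "nat \<Rightarrow> bool list set \<Rightarrow> nat" where
  "colk k E = (let L = \<Inter> (setof ` E); d = the_elem (\<Union> (setof ` E) - L) in
     to_nat (d, sorted_list_of_set (L \<inter> {..<2*k}),
       if d \<in> {..<2*k} then card (L - {..<2*k}) mod (2*k) else 0))"

lemma colk_edge: assumes "A \<subseteq> {..<n}" "d < n"
  shows "colk k {vec n A, vec n (xr A {d})} = to_nat (d, sorted_list_of_set ((A - {d}) \<inter> {..<2*k}),
       if d \<in> {..<2*k} then card ((A - {d}) - {..<2*k}) mod (2*k) else 0)"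
proof -
  have B: "xr A {d} \<subseteq> {..<n}" using assms unfolding xr_def by auto
  have s: "setof ` {vec n A, vec n (xr A {d})} = {A, xr A {d}}"
    using setof_vec[OF assms(1)] setof_vec[OF B] by simp
  have i: "\<Inter> {A, xr A {d}} = A - {d}" unfolding xr_def by auto
  have u: "\<Union> {A, xr A {d}} - (A - {d}) = {d}" unfolding xr_def by auto
  show ?thesis unfolding colk_def s Let_def i u by simp
qed

context cyc
begin

definition vs where "vs = map (vec n) W"

lemma vs_len: "length vs = length DS" unfolding vs_def using len_W by simp

lemma vs_distinct: "distinct vs"
proof -
  have "inj_on (vec n) (set W)" using vec_inj W_n by (meson inj_onI)
  then show ?thesis unfolding vs_def using W_distinct by (simp add: distinct_map)
qed

lemma vs_V: "set vs \<subseteq> cube_vertices n" unfolding vs_def cube_vertices_def by auto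

lemma vs_adj: assumes "i < length vs"
  shows "cube_adj n (vs ! i) (vs ! (Suc i mod length vs))"
proof -
  have i: "i < length DS" using assms vs_len by simp
  have "0 < length vs" using assms by arith
  then have m: "Suc i mod length vs < length vs" by (rule mod_less_divisor)
  have e: "W ! (Suc i mod length DS) = xr (W ! i) {DS ! i}" using W_step[OF i] .
  have "W ! i \<in> set W" using i len_W by simp
  then have Wi: "W ! i \<subseteq> {..<n}" using W_n by blast
  have "W ! (Suc i mod length DS) \<in> set W" using m vs_len len_W by simp
  then have Wj: "W ! (Suc i mod length DS) \<subseteq> {..<n}" using W_n by blast
  have "{t. t < n \<and> vs ! i ! t \<noteq> vs ! (Suc i mod length vs) ! t} = xr (W ! i) (W ! (Suc i mod length DS))"
    unfolding vs_def using adj_vec[OF Wi Wj] i m vs_len len_W by simp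
  also have "\<dots> = {DS ! i}" using e by (simp add: xr_self)
  finally show ?thesis unfolding cube_adj_def by simp
qed

lemma vs_X: "j < k \<Longrightarrow> vec n (X j) \<in> set vs"
  unfolding vs_def using X_in_W by auto

lemma vs_edge_col: assumes "i < length vs"
  shows "colk k {vs ! i, vs ! (Suc i mod length vs)} =
    to_nat (fst (ctup (stp (bA 0) DS ! i)), sorted_list_of_set (fst (snd (ctup (stp (bA 0) DS ! i)))),
            snd (snd (ctup (stp (bA 0) DS ! i))))"
proof -
  have i: "i < length DS" using assms vs_len by simp
  have e: "W ! (Suc i mod length DS) = xr (W ! i) {DS ! i}" using W_step[OF i] .
  have "W ! i \<in> set W" using i len_W by simp
  then have Wi: "W ! i \<subseteq> {..<n}" using W_n by blast
  have d: "DS ! i < n" using DS_n nth_mem[OF i] by auto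
  have "0 < length vs" using assms by arith
  then have m: "Suc i mod length vs < length vs" by (rule mod_less_divisor)
  have "colk k {vs ! i, vs ! (Suc i mod length vs)} = colk k {vec n (W ! i), vec n (xr (W ! i) {DS ! i})}"
    unfolding vs_def using i m len_W vs_len e by simp
  also have "\<dots> = to_nat (DS ! i, sorted_list_of_set ((W ! i - {DS ! i}) \<inter> {..<2*k}),
       if DS ! i \<in> {..<2*k} then card ((W ! i - {DS ! i}) - {..<2*k}) mod (2*k) else 0)"
    by (rule colk_edge[OF Wi d])
  finally show ?thesis using stp_nth[OF i, of "bA 0"] unfolding W_def ctup_def H_def by simp
qed

lemma vs_rainbow:
  assumes resp: "\<And>j. j < k \<Longrightarrow> card (p j) mod (2*k) = 2*j"
    and resq: "\<And>j. j < k \<Longrightarrow> card (q j) mod (2*k) = 2*j + 1"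
  shows "rainbow_cycle (colk k) vs"
  unfolding rainbow_cycle_def
proof (rule inj_onI)
  fix e1 e2 assume e1: "e1 \<in> cycle_edges vs" and e2: "e2 \<in> cycle_edges vs" and c: "colk k e1 = colk k e2"
  obtain i1 where i1: "i1 < length vs" "e1 = {vs ! i1, vs ! (Suc i1 mod length vs)}"
    using e1 unfolding cycle_edges_def by blast
  obtain i2 where i2: "i2 < length vs" "e2 = {vs ! i2, vs ! (Suc i2 mod length vs)}"
    using e2 unfolding cycle_edges_def by blast
  let ?c = "\<lambda>i. ctup (stp (bA 0) DS ! i)"
  have fin: "\<And>i. finite (fst (snd (?c i)))" unfolding ctup_def H_def by simp
  have "(fst (?c i1), sorted_list_of_set (fst (snd (?c i1))), snd (snd (?c i1))) =
        (fst (?c i2), sorted_list_of_set (fst (snd (?c i2))), snd (snd (?c i2)))"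
    using c vs_edge_col[OF i1(1)] vs_edge_col[OF i2(1)] i1(2) i2(2) by (simp add: to_nat_split)
  then have "fst (snd (?c i1)) = fst (snd (?c i2))"
    by (metis fin prod.inject sorted_list_of_set.set_sorted_key_list_of_set)
  then have "?c i1 = ?c i2"
    using \<open>(fst (?c i1), _, _) = _\<close> by (simp add: prod_eq_iff)
  moreover have "i1 < length (map ctup (stp (bA 0) DS))" "i2 < length (map ctup (stp (bA 0) DS))"
    using i1(1) i2(1) vs_len by auto
  ultimately have "map ctup (stp (bA 0) DS) ! i1 = map ctup (stp (bA 0) DS) ! i2"
    by simp
  moreover have "distinct (map ctup (stp (bA 0) DS))" using colours_distinct[OF resp resq] .
  ultimately have "i1 = i2"
    using \<open>i1 < length (map ctup (stp (bA 0) DS))\<close> \<open>i2 < length (map ctup (stp (bA 0) DS))\<close>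
    unfolding distinct_conv_nth by blast
  then show "e1 = e2" using i1 i2 by simp
qed

end


lemma blocks:
  assumes "finite F" "m * s \<le> card F"
  shows "\<exists>B. (\<forall>v<m. B v \<subseteq> F \<and> card (B v) = s) \<and> (\<forall>v<m. \<forall>u<m. v \<noteq> u \<longrightarrow> B v \<inter> B u = {})"
  using assms
proof (induction m arbitrary: F)
  case 0 then show ?case by simp
next
  case (Suc m)
  have "s \<le> card F" using Suc.prems by simp
  then obtain T where T: "T \<subseteq> F" "card T = s" "finite T" by (rule obtain_subset_with_card_n)
  have cF: "card (F - T) = card F - s" using T Suc.prems(1) by (simp add: card_Diff_subset)
  have "m * s \<le> card (F - T)" using cF Suc.prems(2) by simp
  then obtain B' where B': "\<forall>v<m. B' v \<subseteq> F - T \<and> card (B' v) = s"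
      "\<forall>v<m. \<forall>u<m. v \<noteq> u \<longrightarrow> B' v \<inter> B' u = {}"
    using Suc.IH[of "F - T"] Suc.prems(1) by auto
  define B where "B v = (if v = m then T else B' v)" for v
  have 1: "\<forall>v<Suc m. B v \<subseteq> F \<and> card (B v) = s"
    using B'(1) T unfolding B_def by (auto simp: less_Suc_eq)
  have 2: "\<forall>v<Suc m. \<forall>u<Suc m. v \<noteq> u \<longrightarrow> B v \<inter> B u = {}"
  proof (intro allI impI)
    fix v u assume vu: "v < Suc m" "u < Suc m" "v \<noteq> u"
    show "B v \<inter> B u = {}"
    proof (cases "v = m")
      case True
      then have "u < m" using vu by simp
      then show ?thesis using True B'(1) unfolding B_def by auto
    next
      case False
      then have v: "v < m" using vu by simp
      show ?thesis
      proof (cases "u = m")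
        case True then show ?thesis using v B'(1) unfolding B_def by auto
      next
        case False then have "u < m" using vu by simp
        then show ?thesis using v vu B'(2) \<open>v \<noteq> m\<close> False unfolding B_def by auto
      qed
    qed
  qed
  show ?case using 1 2 by blast
qed

lemma res_up: "0 < (M::nat) \<Longrightarrow> \<exists>d. 1 \<le> d \<and> d \<le> M \<and> ((c::nat) + d) mod M = t mod M"
proof (induction c)
  case 0
  show ?case
  proof (cases "t mod M = 0")
    case True then show ?thesis using 0 by (intro exI[of _ M]) auto
  next
    case False then show ?thesis using 0 by (intro exI[of _ "t mod M"]) auto
  qed
next
  case (Suc c)
  then obtain d where d: "1 \<le> d" "d \<le> M" "(c + d) mod M = t mod M" by blast
  show ?case
  proof (cases "d = 1")
    case True
    have "(Suc c + M) mod M = Suc c mod M" by (rule mod_add_self2)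
    then have "(Suc c + M) mod M = (c + d) mod M" using True by simp
    then show ?thesis using d Suc.prems by (intro exI[of _ M]) auto
  next
    case False
    have "Suc c + (d - 1) = c + d" using d False by simp
    then show ?thesis using d False by (intro exI[of _ "d - 1"]) auto
  qed
qed

lemma res_down: assumes "M \<le> (c::nat)" "0 < (M::nat)"
  shows "\<exists>d. 1 \<le> d \<and> d \<le> M \<and> (c - d) mod M = t mod M"
  using assms(1)
proof (induction c rule: dec_induct)
  case base
  have "t mod M < M" using assms(2) by simp
  then show ?case by (intro exI[of _ "M - t mod M"]) auto
next
  case (step c)
  then obtain d where d: "1 \<le> d" "d \<le> M" "(c - d) mod M = t mod M" by blast
  show ?case
  proof (cases "d = M")
    case True
    have "(Suc c - 1) mod M = (c - d) mod M"
    proof -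
      have "c = (c - d) + M" using True step by simp
      then have "c mod M = (c - d) mod M" by (metis mod_add_self2)
      then show ?thesis by simp
    qed
    then show ?thesis using d step by (intro exI[of _ 1]) auto
  next
    case False
    have "Suc c - Suc d = c - d" by simp
    then show ?thesis using d False by (intro exI[of _ "Suc d"]) auto
  qed
qed

lemma res_choice:
  assumes "finite y" "finite B" "2 * M - 1 \<le> card B" "0 < M"
  shows "\<exists>Z. Z \<subseteq> B \<and> Z \<noteq> {} \<and> card (xr y Z) mod M = t mod M"
proof -
  have cB: "card B = card (B - y) + card (B \<inter> y)"
    using assms(2) by (metis Int_Diff_disjoint Un_Diff_Int card_Un_disjoint finite_Diff finite_Int Un_commute inf_commute)
  then consider "M \<le> card (B - y)" | "M \<le> card (B \<inter> y)" using assms(3) by linarith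
  then show ?thesis
  proof cases
    case 1
    obtain d where d: "1 \<le> d" "d \<le> M" "(card y + d) mod M = t mod M" using res_up[OF assms(4)] by blast
    obtain Z where Z: "Z \<subseteq> B - y" "card Z = d" "finite Z"
      using d(2) 1 by (meson le_trans obtain_subset_with_card_n)
    have "xr y Z = y \<union> Z" using Z(1) unfolding xr_def by blast
    moreover have "card (y \<union> Z) = card y + d" using Z assms(1) by (subst card_Un_disjoint) auto
    moreover have "Z \<noteq> {}" using Z(2) d(1) by auto
    ultimately show ?thesis using Z(1) d(3) by (intro exI[of _ Z]) auto
  next
    case 2
    have My: "M \<le> card y" using 2 card_mono[OF assms(1), of "B \<inter> y"] by simp
    obtain d where d: "1 \<le> d" "d \<le> M" "(card y - d) mod M = t mod M"
      using res_down[OF My assms(4)] by blast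
    obtain Z where Z: "Z \<subseteq> B \<inter> y" "card Z = d" "finite Z"
      using d(2) 2 by (meson le_trans obtain_subset_with_card_n)
    have "xr y Z = y - Z" using Z(1) unfolding xr_def by blast
    moreover have "card (y - Z) = card y - d" using Z by (subst card_Diff_subset) auto
    moreover have "Z \<noteq> {}" using Z(2) d(1) by auto
    ultimately show ?thesis using Z(1) d(3) by (intro exI[of _ Z]) auto
  qed
qed

lemma ivt_nat: "\<not> f (0::nat) \<Longrightarrow> f N \<Longrightarrow> \<exists>m<N. \<not> f m \<and> f (Suc m)"
proof (induction N)
  case 0 then show ?case by simp
next
  case (Suc N)
  show ?case
  proof (cases "f N")
    case True
    then obtain m where "m < N" "\<not> f m" "f (Suc m)" using Suc by blast
    then show ?thesis using less_SucI by blast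
  next
    case False then show ?thesis using Suc.prems by auto
  qed
qed



lemma V_eq: "cube_vertices n = {xs. set xs \<subseteq> (UNIV::bool set) \<and> length xs = n}"
  unfolding cube_vertices_def by auto

lemma V_finite: "finite (cube_vertices n)"
  unfolding V_eq using finite_lists_length_eq[of "UNIV::bool set" n] by simp

lemma V_card: "card (cube_vertices n) = 2 ^ n"
  unfolding V_eq using card_lists_length_eq[of "UNIV::bool set" n] by simp

lemma construct:
  fixes S :: "bool list set"
  assumes k4: "4 \<le> k" and SV: "S \<subseteq> cube_vertices n" and cS: "card S = k"
    and s1: "1 \<le> s" and nb: "2*k + k*k + 2*k*s \<le> n"
  shows "\<exists>vs. is_cycle (cube_vertices n) (cube_adj n) vs \<and> S \<subseteq> set vs \<and>
           (4*k - 1 \<le> s \<longrightarrow> rainbow_cycle (colk k) vs)"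
proof -
  have finS: "finite S" using SV V_finite finite_subset by blast
  obtain xl where xl: "distinct xl" "set xl = S" using finite_distinct_list[OF finS] by blast
  have lxl: "length xl = k" using xl cS distinct_card by metis
  have xlV: "\<And>j. j < k \<Longrightarrow> length (xl ! j) = n"
  proof -
    fix j assume "j < k"
    then have "xl ! j \<in> S" using xl lxl nth_mem by metis
    then show "length (xl ! j) = n" using SV unfolding cube_vertices_def by auto
  qed
  define X where "X j = setof (xl ! j)" for j
  define Hs where "Hs = {..<2*k}"
  define Y where "Y = (\<lambda>j. X j - Hs) ` {..<k}"
  define sp where "sp a b = (SOME i. i \<in> xr a b)" for a b
  define Sep where "Sep = (\<lambda>(a,b). sp a b) ` {(a,b). a \<in> Y \<and> b \<in> Y \<and> a \<noteq> b}"
  have finY: "finite Y" unfolding Y_def by simp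
  have cY: "card Y \<le> k" unfolding Y_def using card_image_le[of "{..<k}"] by simp
  have cSep: "card Sep \<le> k*k"
  proof -
    have sub: "{(a,b). a \<in> Y \<and> b \<in> Y \<and> a \<noteq> b} \<subseteq> Y \<times> Y" by auto
    have "card Sep \<le> card {(a,b). a \<in> Y \<and> b \<in> Y \<and> a \<noteq> b}" unfolding Sep_def by (rule card_image_le)
      (use finite_subset[OF sub] finY in auto)
    also have "\<dots> \<le> card (Y \<times> Y)" by (rule card_mono[OF _ sub]) (use finY in auto)
    also have "\<dots> = card Y * card Y" by (simp add: card_cartesian_product)
    also have "\<dots> \<le> k * k" using cY by (simp add: mult_le_mono)
    finally show ?thesis .
  qed
  have finSep: "finite Sep"
  proof -
    have "{(a,b). a \<in> Y \<and> b \<in> Y \<and> a \<noteq> b} \<subseteq> Y \<times> Y" by auto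
    then have "finite {(a,b). a \<in> Y \<and> b \<in> Y \<and> a \<noteq> b}" using finY finite_subset by blast
    then show ?thesis unfolding Sep_def by simp
  qed
  define F where "F = {2*k..<n} - Sep"
  have finF: "finite F" unfolding F_def by simp
  have cF: "2*k*s \<le> card F"
  proof -
    have "card {2*k..<n} - card Sep \<le> card F" unfolding F_def by (rule diff_card_le_card_Diff[OF finSep])
    then show ?thesis using cSep nb by simp
  qed
  obtain Bl where Bl: "\<forall>v<2*k. Bl v \<subseteq> F \<and> card (Bl v) = s"
      "\<forall>v<2*k. \<forall>u<2*k. v \<noteq> u \<longrightarrow> Bl v \<inter> Bl u = {}"
    using blocks[OF finF, of "2*k" s] cF by auto
  have Bl_ne: "\<And>v. v < 2*k \<Longrightarrow> Bl v \<noteq> {}" using Bl(1) s1 by fastforce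
  have Bl_fin: "\<And>v. v < 2*k \<Longrightarrow> finite (Bl v)" using Bl(1) finF finite_subset by blast
  define big where "big = (4*k - 1 \<le> s)"
  have Xfin: "\<And>j. j < k \<Longrightarrow> finite (X j)" unfolding X_def using setof_n finite_subset by blast
  have res: "\<And>j t. j < k \<Longrightarrow> t < 2*k \<Longrightarrow> big \<Longrightarrow>
      \<exists>Z. Z \<subseteq> Bl t \<and> Z \<noteq> {} \<and> card (xr (X j - Hs) Z) mod (2*k) = t"
  proof -
    fix j t assume a: "j < k" "t < 2*k" big
    have "2 * (2*k) - 1 \<le> card (Bl t)" using Bl(1) a unfolding big_def by auto
    then obtain Z where "Z \<subseteq> Bl t" "Z \<noteq> {}" "card (xr (X j - Hs) Z) mod (2*k) = t mod (2*k)"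
      using res_choice[of "X j - Hs" "Bl t" "2*k" t] Xfin[OF a(1)] Bl_fin[OF a(2)] k4 by auto
    then show "\<exists>Z. Z \<subseteq> Bl t \<and> Z \<noteq> {} \<and> card (xr (X j - Hs) Z) mod (2*k) = t" using a(2) by auto
  qed
  define Zp where "Zp j = (if big then (SOME Z. Z \<subseteq> Bl (2*j) \<and> Z \<noteq> {} \<and>
      card (xr (X j - Hs) Z) mod (2*k) = 2*j) else Bl (2*j))" for j
  define Zq where "Zq j = (if big then (SOME Z. Z \<subseteq> Bl (2*j+1) \<and> Z \<noteq> {} \<and>
      card (xr (X j - Hs) Z) mod (2*k) = 2*j+1) else Bl (2*j+1))" for j
  have Zp_prop: "\<And>j. j < k \<Longrightarrow> Zp j \<subseteq> Bl (2*j) \<and> Zp j \<noteq> {} \<and>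
      (big \<longrightarrow> card (xr (X j - Hs) (Zp j)) mod (2*k) = 2*j)"
  proof -
    fix j assume j: "j < k"
    show "Zp j \<subseteq> Bl (2*j) \<and> Zp j \<noteq> {} \<and> (big \<longrightarrow> card (xr (X j - Hs) (Zp j)) mod (2*k) = 2*j)"
    proof (cases big)
      case True
      then show ?thesis unfolding Zp_def using someI_ex[OF res[OF j _ True, of "2*j"]] j by auto
    next
      case False
      then show ?thesis unfolding Zp_def using Bl_ne[of "2*j"] j by auto
    qed
  qed
  have Zq_prop: "\<And>j. j < k \<Longrightarrow> Zq j \<subseteq> Bl (2*j+1) \<and> Zq j \<noteq> {} \<and>
      (big \<longrightarrow> card (xr (X j - Hs) (Zq j)) mod (2*k) = 2*j+1)"
  proof -
    fix j assume j: "j < k"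
    show "Zq j \<subseteq> Bl (2*j+1) \<and> Zq j \<noteq> {} \<and> (big \<longrightarrow> card (xr (X j - Hs) (Zq j)) mod (2*k) = 2*j+1)"
    proof (cases big)
      case True
      then show ?thesis unfolding Zq_def using someI_ex[OF res[OF j _ True, of "2*j+1"]] j by auto
    next
      case False
      then show ?thesis unfolding Zq_def using Bl_ne[of "2*j+1"] j by auto
    qed
  qed
  have h1: "2 \<le> k" using k4 by simp
  have h2: "2 * k \<le> n" using nb by simp
  have h3: "\<And>j. j < k \<Longrightarrow> X j \<subseteq> {..<n}" unfolding X_def using setof_n xlV by metis
  have h4: "\<And>j l. j < k \<Longrightarrow> l < k \<Longrightarrow> X j = X l \<Longrightarrow> j = l"
  proof -
    fix j l assume a: "j < k" "l < k" "X j = X l"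
    then have "xl ! j = xl ! l" unfolding X_def using setof_inj xlV by metis
    then show "j = l" using xl(1) a lxl nth_eq_iff_index_eq by metis
  qed
  have h5: "\<And>j. j < k \<Longrightarrow> finite (Zp j)"
  proof -
    fix j assume j: "j < k"
    have "2*j < 2*k" using j by simp
    then show "finite (Zp j)" using Zp_prop[OF j] Bl_fin finite_subset by blast
  qed
  have h6: "\<And>j. j < k \<Longrightarrow> finite (Zq j)"
  proof -
    fix j assume j: "j < k"
    have "2*j+1 < 2*k" using j by simp
    then show "finite (Zq j)" using Zq_prop[OF j] Bl_fin finite_subset by blast
  qed
  have h7: "\<And>j. j < k \<Longrightarrow> Zp j \<noteq> {}" using Zp_prop by blast
  have h8: "\<And>j. j < k \<Longrightarrow> Zq j \<noteq> {}" using Zq_prop by blast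
  have h9: "\<And>j. j < k \<Longrightarrow> Zp j \<subseteq> {2*k..<n}"
  proof -
    fix j assume j: "j < k"
    have "2*j < 2*k" using j by simp
    then show "Zp j \<subseteq> {2*k..<n}" using Zp_prop[OF j] Bl(1) unfolding F_def by blast
  qed
  have h10: "\<And>j. j < k \<Longrightarrow> Zq j \<subseteq> {2*k..<n}"
  proof -
    fix j assume j: "j < k"
    have "2*j+1 < 2*k" using j by simp
    then show "Zq j \<subseteq> {2*k..<n}" using Zq_prop[OF j] Bl(1) unfolding F_def by blast
  qed
  have h11: "\<And>j l. j < k \<Longrightarrow> l < k \<Longrightarrow> j \<noteq> l \<Longrightarrow> Zp j \<inter> Zp l = {}"
  proof -
    fix j l assume a: "j < k" "l < k" "j \<noteq> l"
    have "Bl (2*j) \<inter> Bl (2*l) = {}" using Bl(2) a by simp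
    then show "Zp j \<inter> Zp l = {}" using Zp_prop[OF a(1)] Zp_prop[OF a(2)] by blast
  qed
  have h12: "\<And>j l. j < k \<Longrightarrow> l < k \<Longrightarrow> j \<noteq> l \<Longrightarrow> Zq j \<inter> Zq l = {}"
  proof -
    fix j l assume a: "j < k" "l < k" "j \<noteq> l"
    have "Bl (2*j+1) \<inter> Bl (2*l+1) = {}" using Bl(2) a by simp
    then show "Zq j \<inter> Zq l = {}" using Zq_prop[OF a(1)] Zq_prop[OF a(2)] by blast
  qed
  have h13: "\<And>j l. j < k \<Longrightarrow> l < k \<Longrightarrow> Zp j \<inter> Zq l = {}"
  proof -
    fix j l assume a: "j < k" "l < k"
    have "2*j \<noteq> 2*l+1" by presburger
    then have "Bl (2*j) \<inter> Bl (2*l+1) = {}" using Bl(2) a by simp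
    then show "Zp j \<inter> Zq l = {}" using Zp_prop[OF a(1)] Zq_prop[OF a(2)] by blast
  qed
  have h14: "\<And>j l. j < k \<Longrightarrow> l < k \<Longrightarrow> X j - {..<2*k} \<noteq> X l - {..<2*k} \<Longrightarrow>
       \<exists>i. i \<in> xr (X j - {..<2*k}) (X l - {..<2*k}) \<and> (\<forall>m<k. i \<notin> Zp m \<and> i \<notin> Zq m)"
  proof -
    fix j l assume a: "j < k" "l < k" "X j - {..<2*k} \<noteq> X l - {..<2*k}"
    let ?a = "X j - Hs" and ?b = "X l - Hs"
    have ab: "?a \<in> Y" "?b \<in> Y" "?a \<noteq> ?b" using a unfolding Y_def Hs_def by auto
    have "xr ?a ?b \<noteq> {}" using ab(3) unfolding xr_def by blast
    then have i: "sp ?a ?b \<in> xr ?a ?b" unfolding sp_def by (meson ex_in_conv someI_ex)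
    have "sp ?a ?b \<in> Sep" unfolding Sep_def using ab by force
    then have "sp ?a ?b \<notin> F" unfolding F_def by blast
    moreover have "\<forall>m<k. Zp m \<subseteq> F \<and> Zq m \<subseteq> F"
    proof (intro allI impI)
      fix m assume m: "m < k"
      have "2*m < 2*k" "2*m+1 < 2*k" using m by auto
      then show "Zp m \<subseteq> F \<and> Zq m \<subseteq> F" using Zp_prop[OF m] Zq_prop[OF m] Bl(1) by blast
    qed
    ultimately have "\<forall>m<k. sp ?a ?b \<notin> Zp m \<and> sp ?a ?b \<notin> Zq m" by blast
    then show "\<exists>i. i \<in> xr (X j - {..<2*k}) (X l - {..<2*k}) \<and> (\<forall>m<k. i \<notin> Zp m \<and> i \<notin> Zq m)"
      using i unfolding Hs_def by blast
  qed
  have loc: "cyc k n X Zp Zq"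
    by (rule cyc.intro[OF h1 h2 h3 h4 h5 h6 h7 h8 h9 h10 h11 h12 h13 h14])
  interpret C: cyc k n X Zp Zq by (rule loc)
  have SW: "S \<subseteq> set C.vs"
  proof
    fix x assume "x \<in> S"
    then obtain j where j: "j < k" "x = xl ! j" using xl lxl by (metis in_set_conv_nth)
    then have "x = vec n (X j)" unfolding X_def using vec_setof xlV by metis
    then show "x \<in> set C.vs" using C.vs_X j by simp
  qed
  have "card S \<le> length C.vs" using card_mono[OF _ SW] card_length[of C.vs] by simp
  then have len: "3 \<le> length C.vs" using cS k4 by simp
  have cyc: "is_cycle (cube_vertices n) (cube_adj n) C.vs"
    unfolding is_cycle_def using len C.vs_distinct C.vs_V C.vs_adj by blast
  have rb: "big \<longrightarrow> rainbow_cycle (colk k) C.vs"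
  proof
    assume big
    have rp: "\<And>j. j < k \<Longrightarrow> card (C.p j) mod (2*k) = 2*j"
      unfolding C.p_def C.y_def C.H_def using Zp_prop \<open>big\<close> unfolding Hs_def by blast
    have rq: "\<And>j. j < k \<Longrightarrow> card (C.q j) mod (2*k) = 2*j+1"
      unfolding C.q_def C.y_def C.H_def using Zq_prop \<open>big\<close> unfolding Hs_def by blast
    show "rainbow_cycle (colk k) C.vs" by (rule C.vs_rainbow[OF rp rq])
  qed
  show ?thesis using cyc SW rb unfolding big_def by blast
qed



lemma cyc_edges_sub: "is_cycle V adj vs \<Longrightarrow> cycle_edges vs \<subseteq> graph_edges V adj"
proof
  fix e assume c: "is_cycle V adj vs" and e: "e \<in> cycle_edges vs"
  obtain i where i: "i < length vs" "e = {vs ! i, vs ! (Suc i mod length vs)}"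
    using e unfolding cycle_edges_def by blast
  have "0 < length vs" using i by arith
  then have m: "Suc i mod length vs < length vs" by (rule mod_less_divisor)
  have sub: "set vs \<subseteq> V" using c unfolding is_cycle_def by simp
  have al: "\<forall>i<length vs. adj (vs ! i) (vs ! (Suc i mod length vs))" using c unfolding is_cycle_def by simp
  have 1: "vs ! i \<in> V" using subsetD[OF sub nth_mem[OF i(1)]] .
  have 2: "vs ! (Suc i mod length vs) \<in> V" using subsetD[OF sub nth_mem[OF m]] .
  have 3: "adj (vs ! i) (vs ! (Suc i mod length vs))" using al i(1) by simp
  have "{vs ! i, vs ! (Suc i mod length vs)} \<in> {{u, v} | u v. u \<in> V \<and> v \<in> V \<and> adj u v}"
    using 1 2 3 by (intro CollectI exI conjI) (rule refl)
  then show "e \<in> graph_edges V adj" unfolding graph_edges_def i(2) .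
qed

lemma E_sub: "graph_edges V adj \<subseteq> (\<lambda>(u,v). {u,v}) ` (V \<times> V)"
proof
  fix e assume "e \<in> graph_edges V adj"
  then obtain u v where uv: "e = {u, v}" "u \<in> V" "v \<in> V" unfolding graph_edges_def by blast
  then have "e = (\<lambda>(u,v). {u,v}) (u, v)" by simp
  moreover have "(u, v) \<in> V \<times> V" using uv by simp
  ultimately show "e \<in> (\<lambda>(u,v). {u,v}) ` (V \<times> V)" by (rule image_eqI)
qed

lemma E_finite: "finite (graph_edges (cube_vertices n) (cube_adj n))"
  by (rule finite_subset[OF E_sub]) (simp add: V_finite)

lemma E_card: "card (graph_edges (cube_vertices n) (cube_adj n)) \<le> 2^n * 2^n"
proof -
  have "card (graph_edges (cube_vertices n) (cube_adj n)) \<le>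
      card ((\<lambda>(u,v). {u,v}) ` (cube_vertices n \<times> cube_vertices n))"
    by (rule card_mono[OF _ E_sub]) (use V_finite in simp)
  also have "\<dots> \<le> card (cube_vertices n \<times> cube_vertices n)" by (rule card_image_le) (use V_finite in simp)
  also have "\<dots> = 2^n * 2^n" by (simp add: card_cartesian_product V_card)
  finally show ?thesis .
qed

lemma colk_range: assumes "0 < k" "E \<in> graph_edges (cube_vertices n) (cube_adj n)"
  shows "colk k E \<in> to_nat ` ({..<n} \<times> (sorted_list_of_set ` Pow {..<2*k}) \<times> {..<2*k})"
proof -
  obtain u v where uv: "E = {u, v}" "u \<in> cube_vertices n" "v \<in> cube_vertices n" "cube_adj n u v"
    using assms(2) unfolding graph_edges_def by blast
  have lu: "length u = n" "length v = n" using uv unfolding cube_vertices_def by auto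
  let ?A = "setof u" and ?B = "setof v"
  have "card (xr ?A ?B) = 1" using uv(4) diff_setof[OF lu] unfolding cube_adj_def by simp
  then obtain d where d: "xr ?A ?B = {d}" using card_1_singletonE by blast
  have "d \<in> {i. i < n \<and> u ! i \<noteq> v ! i}" using d diff_setof[OF lu] by simp
  then have dn: "d < n" by simp
  have s: "setof ` E = {?A, ?B}" using uv(1) by simp
  have i: "\<Inter> {?A, ?B} = ?A \<inter> ?B" by simp
  have u: "\<Union> {?A, ?B} - (?A \<inter> ?B) = {d}" using d unfolding xr_def by auto
  have "colk k E = to_nat (d, sorted_list_of_set ((?A \<inter> ?B) \<inter> {..<2*k}),
       if d \<in> {..<2*k} then card ((?A \<inter> ?B) - {..<2*k}) mod (2*k) else 0)"
    unfolding colk_def s Let_def i u by simp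
  moreover have "(if d \<in> {..<2*k} then card ((?A \<inter> ?B) - {..<2*k}) mod (2*k) else 0) < 2*k"
    using assms(1) by simp
  moreover have "sorted_list_of_set ((?A \<inter> ?B) \<inter> {..<2*k}) \<in> sorted_list_of_set ` Pow {..<2*k}"
    by blast
  ultimately show ?thesis using dn by blast
qed

lemma colk_card: assumes "0 < k"
  shows "card (colk k ` graph_edges (cube_vertices n) (cube_adj n)) \<le> n * (2^(2*k) * (2*k))"
proof -
  let ?T = "{..<n} \<times> (sorted_list_of_set ` Pow {..<2*k}) \<times> {..<2*k}"
  have fT: "finite ?T" by simp
  have "card (colk k ` graph_edges (cube_vertices n) (cube_adj n)) \<le> card (to_nat ` ?T)"
    by (rule card_mono) (use colk_range[OF assms] fT in auto)
  also have "\<dots> \<le> card ?T" by (rule card_image_le[OF fT])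
  also have "\<dots> = n * (card (sorted_list_of_set ` Pow {..<2*k}) * (2*k))"
    by (simp add: card_cartesian_product)
  also have "card (sorted_list_of_set ` Pow {..<2*k}) \<le> 2^(2*k)"
    using card_image_le[of "Pow {..<2*k}" sorted_list_of_set] by (simp add: card_Pow)
  then have "n * (card (sorted_list_of_set ` Pow {..<2*k}) * (2*k)) \<le> n * (2^(2*k) * (2*k))"
    by (simp add: mult_le_mono)
  finally show ?thesis .
qed

lemma lower:
  fixes col :: "bool list set \<Rightarrow> nat"
  assumes n1: "1 \<le> n" and k2: "2 \<le> k" and kn: "k \<le> 2^n"
    and valid: "\<forall>S. S \<subseteq> cube_vertices n \<and> card S = k \<longrightarrow>
         (\<exists>vs. is_cycle (cube_vertices n) (cube_adj n) vs \<and> S \<subseteq> set vs \<and> rainbow_cycle col vs)"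
  shows "n \<le> card (col ` graph_edges (cube_vertices n) (cube_adj n))"
proof -
  let ?V = "cube_vertices n"
  define w0 where "w0 = replicate n False"
  define w1 where "w1 = replicate n True"
  have zo: "w0 \<in> ?V" "w1 \<in> ?V" "w0 \<noteq> w1" unfolding w0_def w1_def cube_vertices_def using n1
    by (auto simp: replicate_eq_replicate)
  have "card (?V - {w0, w1}) = 2^n - 2" using zo V_card V_finite by (simp add: card_Diff_subset)
  then have "k - 2 \<le> card (?V - {w0, w1})" using kn by simp
  then obtain T where T: "T \<subseteq> ?V - {w0, w1}" "card T = k - 2" "finite T"
    by (rule obtain_subset_with_card_n)
  define S where "S = insert w0 (insert w1 T)"
  have SV: "S \<subseteq> ?V" unfolding S_def using T zo by auto
  have n1T: "w1 \<notin> T" "w0 \<notin> insert w1 T" using T zo by auto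
  have cS: "card S = k" unfolding S_def using T(2,3) n1T k2 by (simp add: card_insert_disjoint)
  obtain vs where vs: "is_cycle ?V (cube_adj n) vs" "S \<subseteq> set vs" "rainbow_cycle col vs"
    using valid SV cS by blast
  let ?L = "length vs"
  have "3 \<le> ?L" using vs(1) unfolding is_cycle_def by simp
  then have L0: "0 < ?L" by arith
  obtain i0 where i0: "i0 < ?L" "vs ! i0 = w0" using vs(2) unfolding S_def by (metis in_set_conv_nth insert_subset)
  obtain i1 where i1: "i1 < ?L" "vs ! i1 = w1" using vs(2) unfolding S_def by (metis in_set_conv_nth insert_subset)
  have lens: "\<And>x. x \<in> set vs \<Longrightarrow> length x = n" using vs(1) unfolding is_cycle_def cube_vertices_def by auto
  have edge: "\<And>t. t < n \<Longrightarrow> \<exists>e \<in> cycle_edges vs. \<exists>a b. e = {a, b} \<and> a \<in> ?V \<and> b \<in> ?V \<and>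
       cube_adj n a b \<and> a ! t \<noteq> b ! t"
  proof -
    fix t assume t: "t < n"
    define f where "f m = vs ! ((i0 + m) mod ?L) ! t" for m
    have f0: "\<not> f 0" unfolding f_def using i0 t unfolding w0_def by simp
    have "(i0 + (i1 + ?L - i0)) mod ?L = i1" using i0 i1 by simp
    then have fN: "f (i1 + ?L - i0)" unfolding f_def using i1 t unfolding w1_def by simp
    obtain m where m: "\<not> f m" "f (Suc m)" using ivt_nat[of f, OF f0 fN] by blast
    define j where "j = (i0 + m) mod ?L"
    have j: "j < ?L" unfolding j_def using L0 by simp
    have sj: "Suc j mod ?L = (i0 + Suc m) mod ?L" unfolding j_def by (simp add: mod_Suc_eq)
    have sjl: "Suc j mod ?L < ?L" using L0 by simp
    let ?a = "vs ! j" and ?b = "vs ! (Suc j mod ?L)"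
    have "{?a, ?b} \<in> cycle_edges vs" unfolding cycle_edges_def using j by blast
    moreover have "?a \<in> ?V" "?b \<in> ?V" using vs(1) j sjl nth_mem unfolding is_cycle_def by blast+
    moreover have "cube_adj n ?a ?b" using vs(1) j unfolding is_cycle_def by blast
    moreover have "?a ! t \<noteq> ?b ! t" using m sj unfolding f_def j_def by simp
    ultimately show "\<exists>e \<in> cycle_edges vs. \<exists>a b. e = {a, b} \<and> a \<in> ?V \<and> b \<in> ?V \<and>
       cube_adj n a b \<and> a ! t \<noteq> b ! t" by blast
  qed
  define g where "g t = (SOME e. e \<in> cycle_edges vs \<and> (\<exists>a b. e = {a, b} \<and> a \<in> ?V \<and> b \<in> ?V \<and>
       cube_adj n a b \<and> a ! t \<noteq> b ! t))" for t
  have g: "\<And>t. t < n \<Longrightarrow> g t \<in> cycle_edges vs \<and> (\<exists>a b. g t = {a, b} \<and> a \<in> ?V \<and> b \<in> ?V \<and>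
       cube_adj n a b \<and> a ! t \<noteq> b ! t)"
  proof -
    fix t assume t: "t < n"
    have "\<exists>e. e \<in> cycle_edges vs \<and> (\<exists>a b. e = {a, b} \<and> a \<in> ?V \<and> b \<in> ?V \<and>
       cube_adj n a b \<and> a ! t \<noteq> b ! t)" using edge[OF t] unfolding Bex_def .
    then show "g t \<in> cycle_edges vs \<and> (\<exists>a b. g t = {a, b} \<and> a \<in> ?V \<and> b \<in> ?V \<and>
       cube_adj n a b \<and> a ! t \<noteq> b ! t)" unfolding g_def by (rule someI_ex)
  qed
  have ginj: "inj_on g {..<n}"
  proof (rule inj_onI)
    fix t t' assume tt: "t \<in> {..<n}" "t' \<in> {..<n}" "g t = g t'"
    have tn: "t < n" "t' < n" using tt by auto
    obtain a b where ab: "g t = {a, b}" "cube_adj n a b" "a ! t \<noteq> b ! t" using g[OF tn(1)] by blast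
    obtain a' b' where ab': "g t' = {a', b'}" "a' ! t' \<noteq> b' ! t'" using g[OF tn(2)] by blast
    have "{a, b} = {a', b'}" using ab ab' tt(3) by simp
    then have "a ! t' \<noteq> b ! t'" using ab'(2) by (auto simp: doubleton_eq_iff)
    then have "t \<in> {i. i < n \<and> a ! i \<noteq> b ! i}" "t' \<in> {i. i < n \<and> a ! i \<noteq> b ! i}"
      using tt ab(3) by auto
    moreover have "card {i. i < n \<and> a ! i \<noteq> b ! i} = 1" using ab(2) unfolding cube_adj_def .
    ultimately show "t = t'" by (metis card_1_singletonE singletonD)
  qed
  have fin_ce: "finite (cycle_edges vs)" using finite_subset[OF cyc_edges_sub[OF vs(1)] E_finite] .
  have "n = card (g ` {..<n})" using card_image[OF ginj] by simp
  also have "\<dots> \<le> card (cycle_edges vs)" by (rule card_mono[OF fin_ce]) (use g in auto)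
  also have "\<dots> = card (col ` cycle_edges vs)" using vs(3) unfolding rainbow_cycle_def
    by (simp add: card_image)
  also have "\<dots> \<le> card (col ` graph_edges ?V (cube_adj n))"
    by (rule card_mono) (use E_finite cyc_edges_sub[OF vs(1)] in auto)
  finally show ?thesis .
qed



theorem theorem3p7:
  fixes k :: nat
  assumes "k \<ge> 4"
  shows "\<exists>c C :: real. c > 0 \<and> C > 0 \<and>
    (\<forall>n :: nat. n \<ge> 4 * k\<^sup>2 \<longrightarrow>
       c * real n \<le> real (crx k (cube_vertices n) (cube_adj n)) \<and>
       real (crx k (cube_vertices n) (cube_adj n)) \<le> C * real n)"
proof -
  have k4: "4 \<le> k" using assms .
  define Cn :: nat where "Cn = 2^(2*k) * (2*k) + 4^(9*k*k)"
  have Cpos: "0 < Cn" unfolding Cn_def by simp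
  have main: "n \<le> crx k (cube_vertices n) (cube_adj n) \<and> crx k (cube_vertices n) (cube_adj n) \<le> Cn * n"
    if nk: "4 * k\<^sup>2 \<le> n" for n
  proof -
    let ?V = "cube_vertices n" and ?A = "cube_adj n"
    let ?E = "graph_edges ?V ?A"
    define valid where "valid col = (\<forall>S. S \<subseteq> ?V \<and> card S = k \<longrightarrow>
         (\<exists>vs. is_cycle ?V ?A vs \<and> S \<subseteq> set vs \<and> rainbow_cycle col vs))" for col :: "bool list set \<Rightarrow> nat"
    have kk: "4 * k \<le> k * k" using k4 by (simp add: mult_le_mono1)
    have n4: "4 * (k * k) \<le> n" using nk by (simp add: power2_eq_square)
    have n1: "1 \<le> n" using n4 k4 by (metis le_trans mult_le_mono nat_mult_1 one_le_numeral
          dual_order.trans le_add1 le_square)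
    have kn: "k \<le> n" using n4 kk k4 by linarith
    obtain col0 where c0: "valid col0" "card (col0 ` ?E) \<le> Cn * n"
    proof (cases "9*k*k \<le> n")
      case True
      obtain m where m: "4*k - 1 = m" by simp
      have m1: "m + 1 = 4*k" using m k4 by simp
      have "2*k*m + 2*k = 2*k*(m+1)" by (simp add: algebra_simps)
      also have "\<dots> = 8*(k*k)" using m1 by simp
      finally have "2*k + k*k + 2*k*m = 9*(k*k)" by simp
      then have nb: "2*k + k*k + 2*k*(4*k-1) \<le> n" using True m by simp
      have v: "valid (colk k)" unfolding valid_def
      proof (intro allI impI)
        fix S assume "S \<subseteq> ?V \<and> card S = k"
        then show "\<exists>vs. is_cycle ?V ?A vs \<and> S \<subseteq> set vs \<and> rainbow_cycle (colk k) vs"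
          using construct[OF k4 _ _ _ nb] k4 by auto
      qed
      have "card (colk k ` ?E) \<le> n * (2^(2*k) * (2*k))" using colk_card k4 by simp
      also have "\<dots> \<le> Cn * n" unfolding Cn_def by (simp add: algebra_simps)
      finally show ?thesis using that v by blast
    next
      case False
      obtain f :: "bool list set \<Rightarrow> nat" and N where f: "f ` ?E = {i. i < N}" "inj_on f ?E"
        using finite_imp_inj_to_nat_seg[OF E_finite] by blast
      have nb: "2*k + k*k + 2*k*1 \<le> n" using n4 kk by linarith
      have v: "valid f" unfolding valid_def
      proof (intro allI impI)
        fix S assume S: "S \<subseteq> ?V \<and> card S = k"
        have "\<exists>vs. is_cycle ?V ?A vs \<and> S \<subseteq> set vs \<and> (4*k - 1 \<le> 1 \<longrightarrow> rainbow_cycle (colk k) vs)"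
          using construct[OF k4 conjunct1[OF S] conjunct2[OF S] _ nb] by simp
        then obtain vs where vs: "is_cycle ?V ?A vs" "S \<subseteq> set vs" by blast
        have "inj_on f (cycle_edges vs)" using inj_on_subset[OF f(2) cyc_edges_sub[OF vs(1)]] .
        then show "\<exists>vs. is_cycle ?V ?A vs \<and> S \<subseteq> set vs \<and> rainbow_cycle f vs"
          using vs unfolding rainbow_cycle_def by blast
      qed
      have "card (f ` ?E) \<le> card ?E" by (rule card_image_le[OF E_finite])
      also have "\<dots> \<le> 2^n * 2^n" by (rule E_card)
      also have "\<dots> = 4^n" by (simp add: power_mult_distrib[symmetric])
      also have "\<dots> \<le> 4^(9*k*k)" using False by (intro power_increasing) auto
      also have "\<dots> \<le> Cn" unfolding Cn_def by simp
      also have "\<dots> \<le> Cn * n" using n1 by simp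
      finally show ?thesis using that v by blast
    qed
    have P0: "\<exists>col. card (col ` ?E) = card (col0 ` ?E) \<and> valid col" using c0 by blast
    have le: "crx k ?V ?A \<le> card (col0 ` ?E)"
      unfolding crx_def using P0 unfolding valid_def by (rule Least_le)
    have "\<exists>col :: bool list set \<Rightarrow> nat. card (col ` ?E) = crx k ?V ?A \<and> valid col"
      unfolding crx_def using P0 unfolding valid_def by (rule LeastI)
    then obtain col where col: "card (col ` ?E) = crx k ?V ?A" "valid col" by blast
    have "k \<le> 2^n" using kn less_exp[of n] by linarith
    then have "n \<le> card (col ` ?E)" using lower[OF n1 _ _ col(2)[unfolded valid_def]] k4 by simp
    then show ?thesis using col(1) le c0(2) by simp
  qed
  show ?thesis
  proof (intro exI conjI allI impI)
    show "(0::real) < 1" by simp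
    show "0 < real Cn" using Cpos by simp
    fix n :: nat assume n: "4 * k\<^sup>2 \<le> n"
    show "1 * real n \<le> real (crx k (cube_vertices n) (cube_adj n))" using main[OF n] by simp
    have "crx k (cube_vertices n) (cube_adj n) \<le> Cn * n" using main[OF n] by simp
    then show "real (crx k (cube_vertices n) (cube_adj n)) \<le> real Cn * real n"
      by (metis of_nat_le_iff of_nat_mult)
  qed
qed


end
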